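(* Let $p\ge0$, $\Omega>0$, $S^{(1)},S^{(2)}\in\mathcal B_\Omega$, $x\in[0,\pi]$, and $\mathcal A=\tilde Q^{(1)}(x)(T^{(1)})^{-1}-\tilde Q^{(2)}(x)(T^{(2)})^{-1}$, where objects with superscript $(l)$ are constructed from $S^{(l)}$. Then $\mathcal A$ maps $m$ into $l_2$ and for every $f\in m$, $$\|\mathcal Af\|_{l_2}\le C Z\|f\|_m,$$ where $Z=(\sum_n\delta_n^2)^{1/2}$, $\delta_n=|\rho_n^{(1)}-\rho_n^{(2)}|+|\alpha_n^{(1)}-\alpha_n^{(2)}|$, and $C$ depends only on $p,\Omega$.
   Context: $\mathcal S_p$: collections $S=\{\lambda_n,\alpha_n\}_{n\ge1}$ of complex numbers with $\rho_n:=\sqrt{\lambda_n}$ ($\arg\rho_n\in[-\pi/2,\pi/2)$), $\rho_n=n-p-1+\varkappa_n$, $\alpha_n=2/\pi+\kappa_n$, $\{\varkappa_n\},\{\kappa_n\}\in l_2$. Model data: $\tilde\rho_n=0$ for $n\le p+1$, $\tilde\rho_n=n-p-1$ for $n\ge p+1$, $\tilde\lambda_n=\tilde\rho_n^2$; $\tilde\alpha_1=1/\pi$, $\tilde\alpha_n=0$ for $2\le n\le p+1$, $\tilde\alpha_n=2/\pi$ for $n\ge p+2$. $\xi_n=|\rho_n-\tilde\rho_n|+|\alpha_n-\tilde\alpha_n|$, $\mathcal B_\Omega=\{S\in\mathcal S_p:(\sum\xi_n^2)^{1/2}\le\Omega\}$. For a given $S$: $\lambda_{n0}=\lambda_n,\rho_{n0}=\rho_n,\alpha_{n0}=\alpha_n$,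 $\lambda_{n1}=\tilde\lambda_n,\rho_{n1}=\tilde\rho_n,\alpha_{n1}=\tilde\alpha_n$, $\hat\rho_n=\rho_n-\tilde\rho_n$; $\tilde D(x,\lambda,\mu)=\int_0^x\cos(\sqrt\lambda t)\cos(\sqrt\mu t)dt$; $\tilde Q_{ni,kj}(x)=\alpha_{kj}\tilde D(x,\rho_{ni}^2,\rho_{kj}^2)$; $\tilde Q_{nk}=\begin{pmatrix}\tilde Q_{n0,k0}&-\tilde Q_{n0,k1}\\ \tilde Q_{n1,k0}&-\tilde Q_{n1,k1}\end{pmatrix}$; $T_k^{-1}=\begin{pmatrix}\hat\rho_k&1\\0&1\end{pmatrix}$. $m$: Banach space of bounded sequences $f=(f_{ni})_{n\ge1,i=0,1}$ with sup norm; for $f\in m$, $(T^{-1}f)_n=(\hat\rho_nf_{n0}+f_{n1},f_{n1})^T$ and $(\tilde Q(x)T^{-1}f)_n=\sum_k\tilde Q_{nk}(x)T_k^{-1}f_k$, $f_k=(f_{k0},f_{k1})^T$. *)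

theory Defs
  imports "HOL-Analysis.Analysis"
begin

text \<open>Square root with argument in [-pi/2, pi/2): on the imaginary axis the
  branch with nonpositive imaginary part is chosen.\<close>
definition psqrt :: "complex \<Rightarrow> complex" where
  "psqrt z = (if Re (csqrt z) = 0 then - csqrt z else csqrt z)"

text \<open>Data S = {lambda_n, alpha_n}, indexed by n >= 1 (the value at index 0 is ignored).\<close>
definition rho_of :: "(nat \<Rightarrow> complex) \<Rightarrow> nat \<Rightarrow> complex" where
  "rho_of lam n = psqrt (lam n)"

definition in_Sp :: "nat \<Rightarrow> (nat \<Rightarrow> complex) \<Rightarrow> (nat \<Rightarrow> complex) \<Rightarrow> bool" where
  "in_Sp p lam al \<longleftrightarrow>
     summable (\<lambda>n. (cmod (rho_of lam (Suc n) - of_real (real (Suc n) - real p - 1)))\<^sup>2) \<and>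
     summable (\<lambda>n. (cmod (al (Suc n) - of_real (2 / pi)))\<^sup>2)"

definition rho_t :: "nat \<Rightarrow> nat \<Rightarrow> complex" where
  "rho_t p n = (if n \<le> p + 1 then 0 else of_real (real n - real p - 1))"

definition alpha_t :: "nat \<Rightarrow> nat \<Rightarrow> complex" where
  "alpha_t p n = (if n = 1 then of_real (1 / pi) else if n \<le> p + 1 then 0 else of_real (2 / pi))"

definition xi :: "nat \<Rightarrow> (nat \<Rightarrow> complex) \<Rightarrow> (nat \<Rightarrow> complex) \<Rightarrow> nat \<Rightarrow> real" where
  "xi p lam al n = cmod (rho_of lam n - rho_t p n) + cmod (al n - alpha_t p n)"

definition in_B :: "nat \<Rightarrow> real \<Rightarrow> (nat \<Rightarrow> complex) \<Rightarrow> (nat \<Rightarrow> complex) \<Rightarrow> bool" where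
  "in_B p \<Omega> lam al \<longleftrightarrow> in_Sp p lam al \<and> sqrt (\<Sum>n. (xi p lam al (Suc n))\<^sup>2) \<le> \<Omega>"

definition Dt :: "real \<Rightarrow> complex \<Rightarrow> complex \<Rightarrow> complex" where
  "Dt x la mu = integral {0..x} (\<lambda>t. cos (psqrt la * of_real t) * cos (psqrt mu * of_real t))"

definition rhoI :: "nat \<Rightarrow> (nat \<Rightarrow> complex) \<Rightarrow> nat \<Rightarrow> nat \<Rightarrow> complex" where
  "rhoI p lam n i = (if i = 0 then rho_of lam n else rho_t p n)"

definition alI :: "nat \<Rightarrow> (nat \<Rightarrow> complex) \<Rightarrow> nat \<Rightarrow> nat \<Rightarrow> complex" where
  "alI p al n i = (if i = 0 then al n else alpha_t p n)"

definition Qt :: "nat \<Rightarrow> (nat \<Rightarrow> complex) \<Rightarrow> (nat \<Rightarrow> complex) \<Rightarrow> real \<Rightarrow> nat \<Rightarrow> nat \<Rightarrow> nat \<Rightarrow> nat \<Rightarrow> complex" where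
  "Qt p lam al x n i k j = alI p al k j * Dt x ((rhoI p lam n i)\<^sup>2) ((rhoI p lam k j)\<^sup>2)"

text \<open>The k-th summand of component i of (Q~(x) T^{-1} f)_n:
  Q~_{nk} T_k^{-1} f_k with T_k^{-1} f_k = (rhohat_k f_{k0} + f_{k1}, f_{k1}).\<close>
definition QT_term :: "nat \<Rightarrow> (nat \<Rightarrow> complex) \<Rightarrow> (nat \<Rightarrow> complex) \<Rightarrow> real \<Rightarrow> (nat \<Rightarrow> nat \<Rightarrow> complex)
    \<Rightarrow> nat \<Rightarrow> nat \<Rightarrow> nat \<Rightarrow> complex" where
  "QT_term p lam al x f n i k =
     Qt p lam al x n i k 0 * ((rho_of lam k - rho_t p k) * f k 0 + f k 1) - Qt p lam al x n i k 1 * f k 1"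

definition QT :: "nat \<Rightarrow> (nat \<Rightarrow> complex) \<Rightarrow> (nat \<Rightarrow> complex) \<Rightarrow> real \<Rightarrow> (nat \<Rightarrow> nat \<Rightarrow> complex)
    \<Rightarrow> nat \<Rightarrow> nat \<Rightarrow> complex" where
  "QT p lam al x f n i = (\<Sum>k. QT_term p lam al x f n i (Suc k))"

definition in_m :: "(nat \<Rightarrow> nat \<Rightarrow> complex) \<Rightarrow> bool" where
  "in_m f \<longleftrightarrow> bdd_above {cmod (f n i) | n i. n \<ge> 1 \<and> i \<le> 1}"

definition m_norm :: "(nat \<Rightarrow> nat \<Rightarrow> complex) \<Rightarrow> real" where
  "m_norm f = Sup {cmod (f n i) | n i. n \<ge> 1 \<and> i \<le> 1}"

end

theory Submission imports Defs begin


definition strip :: "real \<Rightarrow> complex set" where "strip R = {u. \<bar>Im u\<bar> \<le> R}"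

lemma convex_strip: "convex (strip R)"
  unfolding convex_def strip_def
proof (clarsimp)
  fix x y :: complex and u v :: real
  assume h: "\<bar>Im x\<bar> \<le> R" "\<bar>Im y\<bar> \<le> R" "0 \<le> u" "0 \<le> v" "u + v = 1"
  then show "\<bar>u * Im x + v * Im y\<bar> \<le> R"
  proof -
    have "\<bar>u * Im x + v * Im y\<bar> \<le> u * \<bar>Im x\<bar> + v * \<bar>Im y\<bar>"
      using \<open>0 \<le> u\<close> \<open>0 \<le> v\<close> by (simp add: abs_mult abs_triangle_ineq[THEN order_trans])
    also have "\<dots> \<le> u * R + v * R"
      using h by (intro add_mono mult_left_mono) auto
    finally show ?thesis using \<open>u+v=1\<close> by (simp add: distrib_right[symmetric])
  qed
qed

lemma norm_cos_strip: "\<bar>Im w\<bar> \<le> R \<Longrightarrow> cmod (cos w) \<le> exp R"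
proof -
  assume a: "\<bar>Im w\<bar> \<le> R"
  have "cmod (cos w) = cmod (exp(\<i> * w) + exp(-(\<i> * w))) / 2"
    by (simp add: cos_exp_eq norm_divide)
  also have "\<dots> \<le> (cmod (exp(\<i> * w)) + cmod (exp(-(\<i> * w)))) / 2"
    by (intro divide_right_mono norm_triangle_ineq) auto
  also have "\<dots> \<le> (exp R + exp R)/2"
    using a by (intro divide_right_mono add_mono) auto
  finally show ?thesis by simp
qed

lemma norm_sin_strip: "\<bar>Im w\<bar> \<le> R \<Longrightarrow> cmod (sin w) \<le> exp R"
proof -
  assume a: "\<bar>Im w\<bar> \<le> R"
  have "cmod (sin w) = cmod (exp(\<i> * w) - exp(-(\<i> * w))) / 2"
    by (simp add: sin_exp_eq norm_divide norm_mult)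
  also have "\<dots> \<le> (cmod (exp(\<i> * w)) + cmod (exp(-(\<i> * w)))) / 2"
    by (intro divide_right_mono norm_triangle_ineq4) auto
  also have "\<dots> \<le> (exp R + exp R)/2"
    using a by (intro divide_right_mono add_mono) auto
  finally show ?thesis by simp
qed

lemma cos_lip: "\<bar>Im w\<bar> \<le> R \<Longrightarrow> \<bar>Im z\<bar> \<le> R \<Longrightarrow> cmod (cos w - cos z) \<le> exp R * cmod (w - z)"
  by (rule field_differentiable_bound[OF convex_strip, where f'="\<lambda>u. - sin u"])
     (auto simp: strip_def intro!: derivative_eq_intros norm_sin_strip)

lemma sin_lip: "\<bar>Im w\<bar> \<le> R \<Longrightarrow> \<bar>Im z\<bar> \<le> R \<Longrightarrow> cmod (sin w - sin z) \<le> exp R * cmod (w - z)"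
  by (rule field_differentiable_bound[OF convex_strip, where f'="\<lambda>u. cos u"])
     (auto simp: strip_def intro!: derivative_eq_intros norm_cos_strip)

lemma cos_taylor2: "\<bar>Im w\<bar> \<le> R \<Longrightarrow> \<bar>Im z\<bar> \<le> R \<Longrightarrow>
   cmod (cos z - cos w + sin w * (z - w)) \<le> exp R * (cmod (z - w))\<^sup>2"
proof -
  assume w: "\<bar>Im w\<bar> \<le> R" and z: "\<bar>Im z\<bar> \<le> R"
  define F where "F = (\<lambda>i::nat. if i = 0 then cos else if i = 1 then (\<lambda>u. - sin u) else (\<lambda>u::complex. - cos u))"
  have "cmod(F 0 z - (\<Sum>i\<le>1. F i w * (z-w) ^ i / (fact i))) \<le> exp R * cmod(z - w)^(Suc 1) / fact 1"
  proof (rule complex_Taylor[OF convex_strip])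
    show "\<And>i x. x \<in> strip R \<Longrightarrow> i \<le> 1 \<Longrightarrow> (F i has_field_derivative F (Suc i) x) (at x within strip R)"
      by (auto simp: F_def le_Suc_eq intro!: derivative_eq_intros)
    show "\<And>x. x \<in> strip R \<Longrightarrow> cmod (F (Suc 1) x) \<le> exp R"
      by (auto simp: F_def strip_def norm_cos_strip)
  qed (use w z in \<open>auto simp: strip_def\<close>)
  then show ?thesis by (simp add: F_def algebra_simps power2_eq_square)
qed

lemma cos_csqrt_sq: "cos (psqrt (z\<^sup>2) * w) = cos (z * w)"
proof -
  have "csqrt (z\<^sup>2) = z \<or> csqrt (z\<^sup>2) = - z"
    by (simp add: power2_eq_iff[symmetric])
  then have "psqrt (z\<^sup>2) = z \<or> psqrt (z\<^sup>2) = - z"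
    unfolding psqrt_def by auto
  then show ?thesis by auto
qed



lemma ftc_real:
  fixes F f :: "real \<Rightarrow> real"
  assumes "a \<le> b" "\<And>t. (F has_real_derivative f t) (at t)"
  shows "(f has_integral (F b - F a)) {a..b}"
  by (rule fundamental_theorem_of_calculus[OF assms(1)])
     (metis assms(2) has_real_derivative_iff_has_vector_derivative has_vector_derivative_at_within)

lemma sin_int_pi: "sin ((real j - real l) * pi) = 0" "sin ((real j + real l) * pi) = 0"
  by (simp_all add: sin_times_pi_eq_0)

lemma orth_cos:
  fixes j l :: nat assumes "j \<ge> 1" "l \<ge> 1"
  shows "((\<lambda>t. cos (real j * t) * cos (real l * t)) has_integral (if j = l then pi/2 else 0)) {0..pi}"
proof (cases "j = l")
  case True
  define F where "F t = t/2 + sin (2 * real j * t) / (4 * real j)" for t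
  have "((\<lambda>t. cos (real j * t) * cos (real l * t)) has_integral (F pi - F 0)) {0..pi}"
  proof (rule ftc_real)
    fix t
    have "cos (real j * t) * cos (real j * t) = 1/2 + cos (2 * real j * t) / 2"
      using cos_double_cos[of "real j * t"] by (simp add: power2_eq_square mult.assoc field_simps)
    moreover have "(F has_real_derivative (1/2 + cos (2 * real j * t) / 2)) (at t)"
      unfolding F_def using assms
      by (auto intro!: derivative_eq_intros simp: field_simps)
    ultimately show "(F has_real_derivative cos (real j * t) * cos (real l * t)) (at t)"
      using True by simp
  qed simp
  moreover have "F pi - F 0 = pi/2"
  proof -
    have "sin (2 * real j * pi) = 0" using sin_npi[of "2*j"] by (simp add: mult.assoc)
    then show ?thesis by (simp add: F_def)
  qed
  ultimately show ?thesis using True by simp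
next
  case False
  define d where "d = real j - real l"
  define s where "s = real j + real l"
  have d0: "d \<noteq> 0" using False by (simp add: d_def)
  have s0: "s \<noteq> 0" using assms by (simp add: s_def)
  define F where "F t = sin (d * t) / (2 * d) + sin (s * t) / (2 * s)" for t
  have "((\<lambda>t. cos (real j * t) * cos (real l * t)) has_integral (F pi - F 0)) {0..pi}"
  proof (rule ftc_real)
    fix t
    have "cos (real j * t) * cos (real l * t) = cos (d * t) / 2 + cos (s * t) / 2"
      unfolding d_def s_def by (simp add: left_diff_distrib distrib_right cos_diff cos_add field_simps)
    moreover have "(F has_real_derivative (cos (d * t) / 2 + cos (s * t) / 2)) (at t)"
      unfolding F_def using d0 s0
      by (auto intro!: derivative_eq_intros simp: field_simps)
    ultimately show "(F has_real_derivative cos (real j * t) * cos (real l * t)) (at t)"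
      by simp
  qed simp
  moreover have "F pi - F 0 = 0"
    using sin_int_pi[of j l] by (simp add: F_def d_def s_def)
  ultimately show ?thesis using False by simp
qed

lemma orth_sin:
  fixes j l :: nat assumes "j \<ge> 1" "l \<ge> 1"
  shows "((\<lambda>t. sin (real j * t) * sin (real l * t)) has_integral (if j = l then pi/2 else 0)) {0..pi}"
proof (cases "j = l")
  case True
  define F where "F t = t/2 - sin (2 * real j * t) / (4 * real j)" for t
  have "((\<lambda>t. sin (real j * t) * sin (real l * t)) has_integral (F pi - F 0)) {0..pi}"
  proof (rule ftc_real)
    fix t
    have "sin (real j * t) * sin (real j * t) = 1/2 - cos (2 * real j * t) / 2"
      using cos_double_sin[of "real j * t"] by (simp add: power2_eq_square mult.assoc field_simps)
    moreover have "(F has_real_derivative (1/2 - cos (2 * real j * t) / 2)) (at t)"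
      unfolding F_def using assms
      by (auto intro!: derivative_eq_intros simp: field_simps)
    ultimately show "(F has_real_derivative sin (real j * t) * sin (real l * t)) (at t)"
      using True by simp
  qed simp
  moreover have "F pi - F 0 = pi/2"
  proof -
    have "sin (2 * real j * pi) = 0" using sin_npi[of "2*j"] by (simp add: mult.assoc)
    then show ?thesis by (simp add: F_def)
  qed
  ultimately show ?thesis using True by simp
next
  case False
  define d where "d = real j - real l"
  define s where "s = real j + real l"
  have d0: "d \<noteq> 0" using False by (simp add: d_def)
  have s0: "s \<noteq> 0" using assms by (simp add: s_def)
  define F where "F t = sin (d * t) / (2 * d) - sin (s * t) / (2 * s)" for t
  have "((\<lambda>t. sin (real j * t) * sin (real l * t)) has_integral (F pi - F 0)) {0..pi}"
  proof (rule ftc_real)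
    fix t
    have "sin (real j * t) * sin (real l * t) = cos (d * t) / 2 - cos (s * t) / 2"
      unfolding d_def s_def by (simp add: left_diff_distrib distrib_right cos_diff cos_add field_simps)
    moreover have "(F has_real_derivative (cos (d * t) / 2 - cos (s * t) / 2)) (at t)"
      unfolding F_def using d0 s0
      by (auto intro!: derivative_eq_intros simp: field_simps)
    ultimately show "(F has_real_derivative sin (real j * t) * sin (real l * t)) (at t)"
      by simp
  qed simp
  moreover have "F pi - F 0 = 0"
    using sin_int_pi[of j l] by (simp add: F_def d_def s_def)
  ultimately show ?thesis using False by simp
qed



lemma orth_sum_real:
  fixes \<phi> :: "'a \<Rightarrow> real \<Rightarrow> real"
  assumes K: "finite K" and orth: "\<And>k l. k\<in>K \<Longrightarrow> l\<in>K \<Longrightarrow> ((\<lambda>t. \<phi> k t * \<phi> l t) has_integral (if k = l then pi/2 else 0)) {0..pi}"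
  shows "((\<lambda>t. (\<Sum>k\<in>K. c k * \<phi> k t)\<^sup>2) has_integral (pi/2 * (\<Sum>k\<in>K. (c k)\<^sup>2))) {0..pi}"
proof -
  have eq: "(\<Sum>k\<in>K. c k * \<phi> k t)\<^sup>2 = (\<Sum>k\<in>K. \<Sum>l\<in>K. c k * c l * (\<phi> k t * \<phi> l t))" for t
    by (simp add: power2_eq_square sum_product mult_ac)
  have "((\<lambda>t. \<Sum>k\<in>K. \<Sum>l\<in>K. c k * c l * (\<phi> k t * \<phi> l t)) has_integral
        (\<Sum>k\<in>K. \<Sum>l\<in>K. c k * c l * (if k = l then pi/2 else 0))) {0..pi}"
    by (intro has_integral_sum K has_integral_mult_right orth)
  moreover have "(\<Sum>k\<in>K. \<Sum>l\<in>K. c k * c l * (if k = l then pi/2 else 0)) = pi/2 * (\<Sum>k\<in>K. (c k)\<^sup>2)"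
    using K by (simp add: if_distrib sum.delta sum_distrib_left power2_eq_square mult_ac cong: if_cong)
  ultimately show ?thesis by (simp add: eq)
qed

lemma orth_sum_complex:
  fixes \<phi> :: "'a \<Rightarrow> real \<Rightarrow> real" and u :: "'a \<Rightarrow> complex"
  assumes K: "finite K" and orth: "\<And>k l. k\<in>K \<Longrightarrow> l\<in>K \<Longrightarrow> ((\<lambda>t. \<phi> k t * \<phi> l t) has_integral (if k = l then pi/2 else 0)) {0..pi}"
  shows "((\<lambda>t. (cmod (\<Sum>k\<in>K. u k * of_real (\<phi> k t)))\<^sup>2) has_integral (pi/2 * (\<Sum>k\<in>K. (cmod (u k))\<^sup>2))) {0..pi}"
proof -
  have eq: "(cmod (\<Sum>k\<in>K. u k * of_real (\<phi> k t)))\<^sup>2 = (\<Sum>k\<in>K. Re (u k) * \<phi> k t)\<^sup>2 + (\<Sum>k\<in>K. Im (u k) * \<phi> k t)\<^sup>2" for t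
    by (simp add: cmod_power2 Re_sum Im_sum)
  have "((\<lambda>t. (\<Sum>k\<in>K. Re (u k) * \<phi> k t)\<^sup>2 + (\<Sum>k\<in>K. Im (u k) * \<phi> k t)\<^sup>2) has_integral
     (pi/2 * (\<Sum>k\<in>K. (Re (u k))\<^sup>2) + pi/2 * (\<Sum>k\<in>K. (Im (u k))\<^sup>2))) {0..pi}"
    by (intro has_integral_add orth_sum_real K orth)
  moreover have "pi/2 * (\<Sum>k\<in>K. (Re (u k))\<^sup>2) + pi/2 * (\<Sum>k\<in>K. (Im (u k))\<^sup>2) = pi/2 * (\<Sum>k\<in>K. (cmod (u k))\<^sup>2)"
    by (simp add: cmod_power2 sum.distrib distrib_left)
  ultimately show ?thesis unfolding eq by (metis (no_types, lifting))
qed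



definition cs :: "complex \<Rightarrow> real \<Rightarrow> complex" where "cs r t = cos (r * complex_of_real t)"
definition sn :: "complex \<Rightarrow> real \<Rightarrow> complex" where "sn r t = sin (r * complex_of_real t)"

lemma rho_t_hi: "\<not> k \<le> Suc p \<Longrightarrow> rho_t p k = of_real (real (k - Suc p))"
  by (simp add: rho_t_def of_nat_diff)

lemma cs_hi: "\<not> k \<le> Suc p \<Longrightarrow> cs (rho_t p k) t = of_real (cos (real (k - Suc p) * t))"
  by (simp add: cs_def rho_t_hi cos_of_real[symmetric] del: of_nat_diff)
lemma sn_hi: "\<not> k \<le> Suc p \<Longrightarrow> sn (rho_t p k) t = of_real (sin (real (k - Suc p) * t))"
  by (simp add: sn_def rho_t_hi sin_of_real[symmetric] del: of_nat_diff)
lemma cs_lo: "k \<le> Suc p \<Longrightarrow> cs (rho_t p k) t = 1"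
  by (simp add: cs_def rho_t_def)
lemma sn_lo: "k \<le> Suc p \<Longrightarrow> sn (rho_t p k) t = 0"
  by (simp add: sn_def rho_t_def)

lemma orth_hi_cos:
  "k \<in> {k. \<not> k \<le> Suc p} \<Longrightarrow> l \<in> {k. \<not> k \<le> Suc p} \<Longrightarrow>
   ((\<lambda>t. cos (real (k - Suc p) * t) * cos (real (l - Suc p) * t)) has_integral (if k = l then pi/2 else 0)) {0..pi}"
proof -
  assume "k \<in> {k. \<not> k \<le> Suc p}" "l \<in> {k. \<not> k \<le> Suc p}"
  then have e: "(k - Suc p = l - Suc p) = (k = l)" "1 \<le> k - Suc p" "1 \<le> l - Suc p" by auto
  show ?thesis using orth_cos[OF e(2,3)] unfolding e(1) .
qed

lemma orth_hi_sin:
  "k \<in> {k. \<not> k \<le> Suc p} \<Longrightarrow> l \<in> {k. \<not> k \<le> Suc p} \<Longrightarrow>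
   ((\<lambda>t. sin (real (k - Suc p) * t) * sin (real (l - Suc p) * t)) has_integral (if k = l then pi/2 else 0)) {0..pi}"
proof -
  assume "k \<in> {k. \<not> k \<le> Suc p}" "l \<in> {k. \<not> k \<le> Suc p}"
  then have e: "(k - Suc p = l - Suc p) = (k = l)" "1 \<le> k - Suc p" "1 \<le> l - Suc p" by auto
  show ?thesis using orth_sin[OF e(2,3)] unfolding e(1) .
qed

lemma sq4: "(a + b + c + d)\<^sup>2 \<le> 4 * (a\<^sup>2 + b\<^sup>2 + c\<^sup>2 + d\<^sup>2)" for a b c d :: real
proof -
  have "0 \<le> (a-b)\<^sup>2+(a-c)\<^sup>2+(a-d)\<^sup>2+(b-c)\<^sup>2+(b-d)\<^sup>2+(c-d)\<^sup>2" by simp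
  then show ?thesis by (simp add: power2_eq_square algebra_simps)
qed

lemma arith_final: fixes A :: complex and K K1 :: "nat set" assumes K: "finite K" and K1: "K1 \<subseteq> K"
  and cA: "(cmod A)\<^sup>2 \<le> (real p + 2) * (\<Sum>k\<in>K. (cmod (u k))\<^sup>2)"
  shows "4 * (pi * (cmod A)\<^sup>2 + pi/2 * (\<Sum>k\<in>K1. (cmod (u k))\<^sup>2) + pi\<^sup>2 * (pi/2 * (\<Sum>k\<in>K1. (cmod (v k))\<^sup>2)) + pi * (\<Sum>k\<in>K. W k)\<^sup>2)
     \<le> 200 * (real p + 1) * ((\<Sum>k\<in>K. (cmod (u k))\<^sup>2) + (\<Sum>k\<in>K. (cmod (v k))\<^sup>2) + (\<Sum>k\<in>K. W k)\<^sup>2)"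
proof -
    have cU: "(\<Sum>k\<in>K1. (cmod (u k))\<^sup>2) \<le> (\<Sum>k\<in>K. (cmod (u k))\<^sup>2)"
      by (rule sum_mono2[OF K K1]) auto
    have cV: "(\<Sum>k\<in>K1. (cmod (v k))\<^sup>2) \<le> (\<Sum>k\<in>K. (cmod (v k))\<^sup>2)"
      by (rule sum_mono2[OF K K1]) auto
    have pi4: "pi \<le> 4" using pi_less_4 by simp
    have pi3: "pi\<^sup>2 * pi \<le> 64"
    proof -
      have "pi^3 \<le> 4^3" by (rule power_mono[OF pi4]) simp
      then show ?thesis by (simp add: power2_eq_square power3_eq_cube)
    qed
    define SU where "SU = (\<Sum>k\<in>K. (cmod (u k))\<^sup>2)"
    define SV where "SV = (\<Sum>k\<in>K. (cmod (v k))\<^sup>2)"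
    define SW where "SW = (\<Sum>k\<in>K. W k)\<^sup>2"
    define S1 where "S1 = (\<Sum>k\<in>K1. (cmod (u k))\<^sup>2)"
    define S2 where "S2 = (\<Sum>k\<in>K1. (cmod (v k))\<^sup>2)"
    have SU0: "SU \<ge> 0" "SV \<ge> 0" "SW \<ge> 0" "S1 \<ge> 0" "S2 \<ge> 0" by (auto simp: SU_def SV_def SW_def S1_def S2_def sum_nonneg)
    have cA': "(cmod A)\<^sup>2 \<le> (real p + 2) * SU" using cA by (simp add: SU_def)
    have a: "pi * (cmod A)\<^sup>2 \<le> 4 * ((real p + 2) * SU)"
      by (rule mult_mono[OF pi4 cA']) auto
    have b: "pi/2 * S1 \<le> 2 * SU"
      using mult_mono[OF _ cU, of "pi/2" 2] pi4 SU0 by (simp add: S1_def SU_def)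
    have c: "pi\<^sup>2 * (pi/2 * S2) \<le> 32 * SV"
    proof -
      have "pi\<^sup>2 * (pi/2 * S2) = (pi\<^sup>2 * pi) / 2 * S2" by simp
      also have "\<dots> \<le> 32 * SV" using mult_mono[OF _ cV, of "(pi\<^sup>2 * pi) / 2" 32] pi3 SU0 by (simp add: S2_def SV_def)
      finally show ?thesis .
    qed
    have d: "pi * SW \<le> 4 * SW" using pi4 SU0 by (intro mult_right_mono) auto
    have "4 * (pi * (cmod A)\<^sup>2 + pi/2 * S1 + pi\<^sup>2 * (pi/2 * S2) + pi * SW)
        \<le> 4 * (4 * ((real p + 2) * SU) + 2 * SU + 32 * SV + 4 * SW)"
      by (rule mult_left_mono[OF add_mono[OF add_mono[OF add_mono[OF a b] c] d]]) simp
    also have "\<dots> \<le> 200 * (real p + 1) * (SU + SV + SW)"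
    proof -
      have p0: "0 \<le> real p" by simp
      have "4 * (4 * ((real p + 2) * SU) + 2 * SU + 32 * SV + 4 * SW) = (16 * real p + 40) * SU + 128 * SV + 16 * SW"
        by (simp add: algebra_simps)
      also have "\<dots> \<le> (200 * (real p + 1)) * SU + (200 * (real p + 1)) * SV + (200 * (real p + 1)) * SW"
        using SU0 p0 by (intro add_mono mult_right_mono) auto
      finally show ?thesis by (simp add: distrib_left)
    qed
    finally show ?thesis unfolding SU_def SV_def SW_def S1_def S2_def .
qed

lemma synth:
  fixes u v :: "nat \<Rightarrow> complex" and w :: "nat \<Rightarrow> real \<Rightarrow> complex" and W :: "nat \<Rightarrow> real"
  assumes K: "finite K"
    and Wb: "\<And>k t. k\<in>K \<Longrightarrow> t\<in>{0..pi} \<Longrightarrow> cmod (w k t) \<le> W k"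
    and wc: "\<And>k. k\<in>K \<Longrightarrow> continuous_on {0..pi} (w k)"
  shows "integral {0..pi} (\<lambda>t. (cmod (\<Sum>k\<in>K. u k * cs (rho_t p k) t + v k * of_real t * sn (rho_t p k) t + w k t))\<^sup>2)
       \<le> 200 * (real p + 1) * ((\<Sum>k\<in>K. (cmod (u k))\<^sup>2) + (\<Sum>k\<in>K. (cmod (v k))\<^sup>2) + (\<Sum>k\<in>K. W k)\<^sup>2)"
proof -
  define K0 where "K0 = {k\<in>K. k \<le> Suc p}"
  define K1 where "K1 = {k\<in>K. \<not> k \<le> Suc p}"
  have KU: "K = K0 \<union> K1" "K0 \<inter> K1 = {}" and fin: "finite K0" "finite K1"
    using K by (auto simp: K0_def K1_def)
  define A where "A = (\<Sum>k\<in>K0. u k)"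
  define B where "B t = (\<Sum>k\<in>K1. u k * of_real (cos (real (k - Suc p) * t)))" for t
  define V where "V t = (\<Sum>k\<in>K1. v k * of_real (sin (real (k - Suc p) * t)))" for t
  define G where "G t = (\<Sum>k\<in>K. u k * cs (rho_t p k) t + v k * of_real t * sn (rho_t p k) t + w k t)" for t
  have Geq: "G t = A + B t + of_real t * V t + (\<Sum>k\<in>K. w k t)" for t
  proof -
    let ?f = "\<lambda>k. u k * cs (rho_t p k) t + v k * of_real t * sn (rho_t p k) t"
    have "G t = (\<Sum>k\<in>K. ?f k) + (\<Sum>k\<in>K. w k t)"
      by (simp add: G_def sum.distrib)
    also have "(\<Sum>k\<in>K. ?f k) = (\<Sum>k\<in>K0. ?f k) + (\<Sum>k\<in>K1. ?f k)"
      by (simp add: KU sum.union_disjoint fin)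
    also have "(\<Sum>k\<in>K0. ?f k) = A"
      by (auto simp: A_def K0_def cs_lo sn_lo intro!: sum.cong)
    also have "(\<Sum>k\<in>K1. ?f k) = B t + of_real t * V t"
      by (auto simp: B_def V_def K1_def cs_hi sn_hi sum.distrib sum_distrib_left mult_ac simp del: of_nat_diff intro!: sum.cong)
    finally show ?thesis by simp
  qed
  have pt: "(cmod (G t))\<^sup>2 \<le> 4 * ((cmod A)\<^sup>2 + (cmod (B t))\<^sup>2 + pi\<^sup>2 * (cmod (V t))\<^sup>2 + (\<Sum>k\<in>K. W k)\<^sup>2)"
    if t: "t \<in> {0..pi}" for t
  proof -
    have "cmod (G t) \<le> cmod A + cmod (B t) + cmod (of_real t * V t) + cmod (\<Sum>k\<in>K. w k t)"
      unfolding Geq by (intro order_trans[OF norm_triangle_ineq] add_mono order_refl)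
    also have "cmod (\<Sum>k\<in>K. w k t) \<le> (\<Sum>k\<in>K. W k)"
      by (rule order_trans[OF norm_sum sum_mono]) (use Wb t in auto)
    also have "cmod (of_real t * V t) = t * cmod (V t)" using t by (simp add: norm_mult)
    finally have 1: "cmod (G t) \<le> cmod A + cmod (B t) + t * cmod (V t) + (\<Sum>k\<in>K. W k)" by simp
    have "(cmod (G t))\<^sup>2 \<le> (cmod A + cmod (B t) + t * cmod (V t) + (\<Sum>k\<in>K. W k))\<^sup>2"
      by (rule power_mono[OF 1 norm_ge_zero])
    also have "\<dots> \<le> 4 * ((cmod A)\<^sup>2 + (cmod (B t))\<^sup>2 + (t * cmod (V t))\<^sup>2 + (\<Sum>k\<in>K. W k)\<^sup>2)"
      by (rule sq4)
    also have "(t * cmod (V t))\<^sup>2 \<le> pi\<^sup>2 * (cmod (V t))\<^sup>2"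
      using t by (auto simp: power_mult_distrib intro!: mult_right_mono power_mono)
    finally show ?thesis by simp
  qed
  have hB: "((\<lambda>t. (cmod (B t))\<^sup>2) has_integral (pi/2 * (\<Sum>k\<in>K1. (cmod (u k))\<^sup>2))) {0..pi}"
    unfolding B_def by (rule orth_sum_complex[OF fin(2)]) (rule orth_hi_cos, auto simp: K1_def)
  have hV: "((\<lambda>t. (cmod (V t))\<^sup>2) has_integral (pi/2 * (\<Sum>k\<in>K1. (cmod (v k))\<^sup>2))) {0..pi}"
    unfolding V_def by (rule orth_sum_complex[OF fin(2)]) (rule orth_hi_sin, auto simp: K1_def)
  have hR: "((\<lambda>t. 4 * ((cmod A)\<^sup>2 + (cmod (B t))\<^sup>2 + pi\<^sup>2 * (cmod (V t))\<^sup>2 + (\<Sum>k\<in>K. W k)\<^sup>2)) has_integral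
      4 * (pi * (cmod A)\<^sup>2 + pi/2 * (\<Sum>k\<in>K1. (cmod (u k))\<^sup>2) + pi\<^sup>2 * (pi/2 * (\<Sum>k\<in>K1. (cmod (v k))\<^sup>2)) + pi * (\<Sum>k\<in>K. W k)\<^sup>2)) {0..pi}"
    using has_integral_const_real[of "(cmod A)\<^sup>2" 0 pi] has_integral_const_real[of "(\<Sum>k\<in>K. W k)\<^sup>2" 0 pi]
    by (intro has_integral_mult_right has_integral_add hB has_integral_mult_right hV) auto
  have contG: "continuous_on {0..pi} (\<lambda>t. (cmod (G t))\<^sup>2)"
    unfolding G_def cs_def sn_def using wc by (intro continuous_intros) auto
  have "integral {0..pi} (\<lambda>t. (cmod (G t))\<^sup>2) \<le>
      4 * (pi * (cmod A)\<^sup>2 + pi/2 * (\<Sum>k\<in>K1. (cmod (u k))\<^sup>2) + pi\<^sup>2 * (pi/2 * (\<Sum>k\<in>K1. (cmod (v k))\<^sup>2)) + pi * (\<Sum>k\<in>K. W k)\<^sup>2)"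
    by (rule has_integral_le[OF integrable_integral[OF integrable_continuous_real[OF contG]] hR pt])
  also have "\<dots> \<le> 200 * (real p + 1) * ((\<Sum>k\<in>K. (cmod (u k))\<^sup>2) + (\<Sum>k\<in>K. (cmod (v k))\<^sup>2) + (\<Sum>k\<in>K. W k)\<^sup>2)"
  proof -
    have cA: "(cmod A)\<^sup>2 \<le> (real p + 2) * (\<Sum>k\<in>K. (cmod (u k))\<^sup>2)"
    proof -
      have 1: "(cmod A)\<^sup>2 \<le> (\<Sum>k\<in>K0. (cmod (u k))\<^sup>2) * card K0"
      proof -
        have "(cmod A)\<^sup>2 \<le> (\<Sum>k\<in>K0. cmod (u k))\<^sup>2"
          unfolding A_def by (rule power_mono[OF norm_sum norm_ge_zero])
        also have "\<dots> \<le> (\<Sum>k\<in>K0. (cmod (u k))\<^sup>2) * card K0"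
          by (rule sum_squared_le_sum_of_squares)
        finally show ?thesis .
      qed
      have "card K0 \<le> card {..Suc p}"
        by (rule card_mono) (auto simp: K0_def)
      then have 2: "real (card K0) \<le> real p + 2" by simp
      have 3: "(\<Sum>k\<in>K0. (cmod (u k))\<^sup>2) \<le> (\<Sum>k\<in>K. (cmod (u k))\<^sup>2)"
        by (rule sum_mono2[OF K]) (auto simp: K0_def)
      have "(\<Sum>k\<in>K0. (cmod (u k))\<^sup>2) * card K0 \<le> (\<Sum>k\<in>K. (cmod (u k))\<^sup>2) * (real p + 2)"
        by (rule mult_mono[OF 3 2]) (auto simp: sum_nonneg)
      with 1 show ?thesis by (simp add: mult.commute)
    qed
    show ?thesis by (rule arith_final[OF K _ cA]) (auto simp: K1_def)
  qed
  finally show ?thesis unfolding G_def .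
qed



lemma quad_real:
  fixes X A B :: real
  assumes X: "X \<ge> 0" and A: "A \<ge> 0" and B: "B \<ge> 0"
    and H: "\<And>e. e > 0 \<Longrightarrow> 2 * e * X \<le> e\<^sup>2 * A + B"
  shows "X\<^sup>2 \<le> A * B"
proof (cases "X = 0")
  case True then show ?thesis using A B by simp
next
  case False
  then have Xp: "X > 0" using X by simp
  show ?thesis
  proof (cases "A = 0")
    case True
    have "2 * ((B+1)/(2*X)) * X \<le> ((B+1)/(2*X))\<^sup>2 * A + B"
      by (rule H) (use Xp B in auto)
    then have "B + 1 \<le> B" using True Xp by (simp add: field_simps)
    then show ?thesis by simp
  next
    case False
    then have Ap: "A > 0" using A by simp
    have "2 * (X/A) * X \<le> (X/A)\<^sup>2 * A + B"
      by (rule H) (use Xp Ap in auto)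
    then have "X\<^sup>2 / A \<le> B" using Ap by (simp add: field_simps power2_eq_square)
    then show ?thesis using Ap by (simp add: field_simps mult.commute)
  qed
qed

lemma CS_integral:
  fixes u v :: "real \<Rightarrow> complex"
  assumes cu: "continuous_on {a..b} u" and cv: "continuous_on {a..b} v"
  shows "(cmod (integral {a..b} (\<lambda>t. u t * v t)))\<^sup>2 \<le>
     integral {a..b} (\<lambda>t. (cmod (u t))\<^sup>2) * integral {a..b} (\<lambda>t. (cmod (v t))\<^sup>2)"
proof (rule quad_real)
  have iu: "(\<lambda>t. (cmod (u t))\<^sup>2) integrable_on {a..b}"
    by (intro integrable_continuous_real continuous_intros cu)
  have iv: "(\<lambda>t. (cmod (v t))\<^sup>2) integrable_on {a..b}"
    by (intro integrable_continuous_real continuous_intros cv)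
  have iuv: "(\<lambda>t. u t * v t) integrable_on {a..b}"
    by (intro integrable_continuous_interval continuous_intros cu cv)
  have iuv': "(\<lambda>t. cmod (u t) * cmod (v t)) integrable_on {a..b}"
    by (intro integrable_continuous_real continuous_intros cu cv)
  show "integral {a..b} (\<lambda>t. (cmod (u t))\<^sup>2) \<ge> 0"
    by (rule integral_nonneg[OF iu]) auto
  show "integral {a..b} (\<lambda>t. (cmod (v t))\<^sup>2) \<ge> 0"
    by (rule integral_nonneg[OF iv]) auto
  show "cmod (integral {a..b} (\<lambda>t. u t * v t)) \<ge> 0" by simp
  fix e :: real assume e: "e > 0"
  have "cmod (integral {a..b} (\<lambda>t. u t * v t)) \<le> integral {a..b} (\<lambda>t. cmod (u t) * cmod (v t))"
    by (rule integral_norm_bound_integral[OF iuv iuv']) (simp add: norm_mult)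
  then have "2 * e * cmod (integral {a..b} (\<lambda>t. u t * v t)) \<le> integral {a..b} (\<lambda>t. 2 * e * (cmod (u t) * cmod (v t)))"
    using e by simp
  also have "\<dots> \<le> integral {a..b} (\<lambda>t. e\<^sup>2 * (cmod (u t))\<^sup>2 + (cmod (v t))\<^sup>2)"
  proof (rule integral_le)
    show "(\<lambda>t. 2 * e * (cmod (u t) * cmod (v t))) integrable_on {a..b}"
      by (intro integrable_continuous_real continuous_intros cu cv)
    show "(\<lambda>t. e\<^sup>2 * (cmod (u t))\<^sup>2 + (cmod (v t))\<^sup>2) integrable_on {a..b}"
      by (intro integrable_continuous_real continuous_intros cu cv)
    fix t
    have "0 \<le> (e * cmod (u t) - cmod (v t))\<^sup>2" by simp
    then show "2 * e * (cmod (u t) * cmod (v t)) \<le> e\<^sup>2 * (cmod (u t))\<^sup>2 + (cmod (v t))\<^sup>2"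
      by (simp add: power2_eq_square algebra_simps)
  qed
  also have "\<dots> = e\<^sup>2 * integral {a..b} (\<lambda>t. (cmod (u t))\<^sup>2) + integral {a..b} (\<lambda>t. (cmod (v t))\<^sup>2)"
  proof -
    have iu2: "(\<lambda>t. e\<^sup>2 * (cmod (u t))\<^sup>2) integrable_on {a..b}"
      by (intro integrable_continuous_real continuous_intros cu)
    show ?thesis by (simp add: integral_add[OF iu2 iv] integral_mult_right)
  qed
  finally show "2 * e * cmod (integral {a..b} (\<lambda>t. u t * v t)) \<le> e\<^sup>2 * integral {a..b} (\<lambda>t. (cmod (u t))\<^sup>2) + integral {a..b} (\<lambda>t. (cmod (v t))\<^sup>2)" .
qed

lemma cont_cs[continuous_intros]: "continuous_on S (cs r)"
  unfolding cs_def by (intro continuous_intros)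
lemma cont_sn[continuous_intros]: "continuous_on S (sn r)"
  unfolding sn_def by (intro continuous_intros)

lemma cnj_cs_t: "cnj (cs (rho_t p k) t) = cs (rho_t p k) t"
  by (cases "k \<le> Suc p") (simp_all add: cs_lo cs_hi)

lemma Bessel:
  fixes g :: "real \<Rightarrow> complex"
  assumes N: "finite N" and gc: "continuous_on {0..pi} g" and x: "0 \<le> x" "x \<le> pi"
  shows "(\<Sum>n\<in>N. (cmod (integral {0..x} (\<lambda>t. cs (rho_t p n) t * g t)))\<^sup>2)
     \<le> 200 * (real p + 1) * integral {0..x} (\<lambda>t. (cmod (g t))\<^sup>2)"
proof -
  define a where "a n = integral {0..x} (\<lambda>t. cs (rho_t p n) t * g t)" for n
  define s where "s t = (\<Sum>n\<in>N. cnj (a n) * cs (rho_t p n) t)" for t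
  define S where "S = (\<Sum>n\<in>N. (cmod (a n))\<^sup>2)"
  define G where "G = integral {0..x} (\<lambda>t. (cmod (g t))\<^sup>2)"
  define C where "C = 200 * (real p + 1)"
  have gc': "continuous_on {0..x} g" by (rule continuous_on_subset[OF gc]) (use x in auto)
  have sc: "continuous_on {0..pi} s" unfolding s_def by (intro continuous_intros)
  have S0: "S \<ge> 0" by (simp add: S_def sum_nonneg)
  have G0: "G \<ge> 0" unfolding G_def
    by (rule integral_nonneg) (auto intro!: integrable_continuous_real continuous_intros gc')
  have "integral {0..x} (\<lambda>t. s t * g t) = (\<Sum>n\<in>N. cnj (a n) * a n)"
  proof -
    have "integral {0..x} (\<lambda>t. s t * g t) = integral {0..x} (\<lambda>t. \<Sum>n\<in>N. cnj (a n) * (cs (rho_t p n) t * g t))"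
      by (simp add: s_def sum_distrib_right mult.assoc)
    also have "\<dots> = (\<Sum>n\<in>N. integral {0..x} (\<lambda>t. cnj (a n) * (cs (rho_t p n) t * g t)))"
      by (rule integral_sum[OF N]) (auto intro!: integrable_continuous_interval continuous_intros gc')
    also have "\<dots> = (\<Sum>n\<in>N. cnj (a n) * a n)"
      by (simp add: a_def)
    finally show ?thesis .
  qed
  also have "\<dots> = of_real S"
    unfolding S_def of_real_sum complex_norm_square by (simp add: mult.commute)
  finally have Seq: "S = cmod (integral {0..x} (\<lambda>t. s t * g t))" using S0 by simp
  have "S\<^sup>2 \<le> integral {0..x} (\<lambda>t. (cmod (s t))\<^sup>2) * G"
    unfolding Seq G_def
    by (rule CS_integral) (use sc x in \<open>auto intro: continuous_on_subset gc'\<close>)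
  also have "integral {0..x} (\<lambda>t. (cmod (s t))\<^sup>2) \<le> integral {0..pi} (\<lambda>t. (cmod (s t))\<^sup>2)"
    by (rule integral_subset_le) (use x sc in \<open>auto intro!: integrable_continuous_real continuous_intros intro: continuous_on_subset\<close>)
  also have "integral {0..pi} (\<lambda>t. (cmod (s t))\<^sup>2) \<le> C * S"
  proof -
    have "integral {0..pi} (\<lambda>t. (cmod (\<Sum>n\<in>N. cnj (a n) * cs (rho_t p n) t + 0 * of_real t * sn (rho_t p n) t + 0))\<^sup>2)
       \<le> 200 * (real p + 1) * ((\<Sum>n\<in>N. (cmod (cnj (a n)))\<^sup>2) + (\<Sum>n\<in>N. (cmod (0::complex))\<^sup>2) + (\<Sum>n\<in>N. 0)\<^sup>2)"
      by (rule synth[OF N]) auto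
    then show ?thesis by (simp add: s_def C_def S_def)
  qed
  finally have "S\<^sup>2 \<le> C * S * G" using G0 by (simp add: mult_right_mono)
  then have "S \<le> C * G"
    using S0 by (cases "S = 0") (auto simp: power2_eq_square mult.commute mult.left_commute G0 C_def)
  then show ?thesis by (simp add: a_def S_def C_def G_def)
qed



lemma alpha_t_le1: "cmod (alpha_t p k) \<le> 1"
proof -
  have "1/pi \<le> 1" "2/pi \<le> 1" using pi_gt3 by (auto simp: field_simps)
  then show ?thesis by (auto simp: alpha_t_def norm_divide)
qed

lemma Im_rho_t[simp]: "Im (rho_t p k) = 0"
  by (simp add: rho_t_def)

lemma xi_summable:
  assumes "in_Sp p lam al"
  shows "summable (\<lambda>n. (xi p lam al (Suc n))\<^sup>2)"
proof -
  let ?a = "\<lambda>n. (cmod (rho_of lam (Suc n) - of_real (real (Suc n) - real p - 1)))\<^sup>2"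
  let ?b = "\<lambda>n. (cmod (al (Suc n) - of_real (2 / pi)))\<^sup>2"
  have sa: "summable ?a" and sb: "summable ?b" using assms by (auto simp: in_Sp_def)
  show ?thesis
  proof (rule summable_comparison_test_ev)
    show "summable (\<lambda>n. 2 * ?a n + 2 * ?b n)" by (intro summable_add summable_mult sa sb)
    show "\<forall>\<^sub>F n in sequentially. norm ((xi p lam al (Suc n))\<^sup>2) \<le> 2 * ?a n + 2 * ?b n"
      unfolding eventually_sequentially
    proof (intro exI allI impI)
      fix n assume n: "Suc p \<le> n"
      have "xi p lam al (Suc n) = sqrt (?a n) + sqrt (?b n)"
        using n by (simp add: xi_def rho_t_def alpha_t_def)
      moreover have "(sqrt (?a n) + sqrt (?b n))\<^sup>2 \<le> 2 * ?a n + 2 * ?b n"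
      proof -
        have "0 \<le> (sqrt (?a n) - sqrt (?b n))\<^sup>2" by simp
        then show ?thesis by (simp add: power2_eq_square algebra_simps)
      qed
      ultimately show "norm ((xi p lam al (Suc n))\<^sup>2) \<le> 2 * ?a n + 2 * ?b n" by simp
    qed
  qed
qed

lemma xi_nonneg: "xi p lam al n \<ge> 0" by (simp add: xi_def)

lemma B_facts:
  assumes B: "in_B p \<Omega> lam al"
  shows "summable (\<lambda>n. (xi p lam al (Suc n))\<^sup>2)" "(\<Sum>n. (xi p lam al (Suc n))\<^sup>2) \<le> \<Omega>\<^sup>2"
    "\<And>J. finite J \<Longrightarrow> (\<Sum>k\<in>J. (xi p lam al (Suc k))\<^sup>2) \<le> \<Omega>\<^sup>2"
    "\<And>k. k \<ge> 1 \<Longrightarrow> xi p lam al k \<le> \<Omega>"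
proof -
  show sm: "summable (\<lambda>n. (xi p lam al (Suc n))\<^sup>2)" using B xi_summable by (auto simp: in_B_def)
  have "sqrt (\<Sum>n. (xi p lam al (Suc n))\<^sup>2) \<le> \<Omega>" using B by (simp add: in_B_def)
  moreover have s0: "(\<Sum>n. (xi p lam al (Suc n))\<^sup>2) \<ge> 0" by (rule suminf_nonneg[OF sm]) simp
  ultimately show le: "(\<Sum>n. (xi p lam al (Suc n))\<^sup>2) \<le> \<Omega>\<^sup>2"
    using real_sqrt_pow2[OF s0] power_mono[of "sqrt (\<Sum>n. (xi p lam al (Suc n))\<^sup>2)" \<Omega> 2] by simp
  show fs: "\<And>J. finite J \<Longrightarrow> (\<Sum>k\<in>J. (xi p lam al (Suc k))\<^sup>2) \<le> \<Omega>\<^sup>2"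
    using sum_le_suminf[OF sm] le by (meson order_trans zero_le_power2)
  fix k :: nat assume k: "k \<ge> 1"
  then obtain j where j: "k = Suc j" by (cases k) auto
  have "(xi p lam al k)\<^sup>2 \<le> \<Omega>\<^sup>2" using fs[of "{j}"] j by simp
  moreover have "\<Omega> \<ge> 0" using B s0 unfolding in_B_def by (meson order_trans real_sqrt_ge_zero)
  ultimately show "xi p lam al k \<le> \<Omega>" by (rule power2_le_imp_le)
qed



lemma Im_rt: "\<bar>Im r\<bar> \<le> W \<Longrightarrow> t \<in> {0..pi} \<Longrightarrow> \<bar>Im (r * complex_of_real t)\<bar> \<le> W * pi"
  by (auto simp: abs_mult intro!: mult_mono)

lemma cs_bound: "\<bar>Im r\<bar> \<le> W \<Longrightarrow> t \<in> {0..pi} \<Longrightarrow> cmod (cs r t) \<le> exp (W * pi)"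
  unfolding cs_def by (rule norm_cos_strip[OF Im_rt])

lemma cs_lip': "\<bar>Im r1\<bar> \<le> W \<Longrightarrow> \<bar>Im r2\<bar> \<le> W \<Longrightarrow> t \<in> {0..pi} \<Longrightarrow>
   cmod (cs r1 t - cs r2 t) \<le> exp (W * pi) * pi * cmod (r1 - r2)"
proof -
  assume a: "\<bar>Im r1\<bar> \<le> W" "\<bar>Im r2\<bar> \<le> W" "t \<in> {0..pi}"
  have "cmod (cs r1 t - cs r2 t) \<le> exp (W * pi) * cmod (r1 * of_real t - r2 * of_real t)"
    unfolding cs_def by (rule cos_lip[OF Im_rt Im_rt]) (use a in auto)
  also have "cmod (r1 * of_real t - r2 * of_real t) = cmod (r1 - r2) * t"
    using a by (simp add: left_diff_distrib[symmetric] norm_mult)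
  also have "exp (W * pi) * (cmod (r1 - r2) * t) \<le> exp (W * pi) * pi * cmod (r1 - r2)"
    using a by (simp add: mult.commute mult.left_commute) (rule mult_right_mono, auto)
  finally show ?thesis by simp
qed

lemma sn_lip': "\<bar>Im r1\<bar> \<le> W \<Longrightarrow> \<bar>Im r2\<bar> \<le> W \<Longrightarrow> t \<in> {0..pi} \<Longrightarrow>
   cmod (sn r1 t - sn r2 t) \<le> exp (W * pi) * pi * cmod (r1 - r2)"
proof -
  assume a: "\<bar>Im r1\<bar> \<le> W" "\<bar>Im r2\<bar> \<le> W" "t \<in> {0..pi}"
  have "cmod (sn r1 t - sn r2 t) \<le> exp (W * pi) * cmod (r1 * of_real t - r2 * of_real t)"
    unfolding sn_def by (rule sin_lip[OF Im_rt Im_rt]) (use a in auto)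
  also have "cmod (r1 * of_real t - r2 * of_real t) = cmod (r1 - r2) * t"
    using a by (simp add: left_diff_distrib[symmetric] norm_mult)
  also have "exp (W * pi) * (cmod (r1 - r2) * t) \<le> exp (W * pi) * pi * cmod (r1 - r2)"
    using a by (simp add: mult.commute mult.left_commute) (rule mult_right_mono, auto)
  finally show ?thesis by simp
qed

lemma cs_taylor': "\<bar>Im r1\<bar> \<le> W \<Longrightarrow> \<bar>Im r2\<bar> \<le> W \<Longrightarrow> t \<in> {0..pi} \<Longrightarrow>
   cmod (cs r1 t - cs r2 t + sn r2 t * (r1 - r2) * of_real t) \<le> exp (W * pi) * pi\<^sup>2 * (cmod (r1 - r2))\<^sup>2"
proof -
  assume a: "\<bar>Im r1\<bar> \<le> W" "\<bar>Im r2\<bar> \<le> W" "t \<in> {0..pi}"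
  have "cmod (cos (r1 * of_real t) - cos (r2 * of_real t) + sin (r2 * of_real t) * (r1 * of_real t - r2 * of_real t))
     \<le> exp (W * pi) * (cmod (r1 * of_real t - r2 * of_real t))\<^sup>2"
    by (rule cos_taylor2[OF Im_rt Im_rt]) (use a in auto)
  also have "cmod (r1 * of_real t - r2 * of_real t) = cmod (r1 - r2) * t"
    using a by (simp add: left_diff_distrib[symmetric] norm_mult)
  also have "exp (W * pi) * (cmod (r1 - r2) * t)\<^sup>2 \<le> exp (W * pi) * pi\<^sup>2 * (cmod (r1 - r2))\<^sup>2"
    using a by (simp add: power_mult_distrib mult.commute mult.left_commute) (rule mult_right_mono[OF power_mono], auto)
  finally show ?thesis by (simp add: cs_def sn_def left_diff_distrib[symmetric] mult.assoc)
qed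

definition dd :: "nat \<Rightarrow> (nat \<Rightarrow> complex) \<Rightarrow> (nat \<Rightarrow> complex) \<Rightarrow> (nat \<Rightarrow> nat \<Rightarrow> complex) \<Rightarrow> nat \<Rightarrow> complex" where
  "dd p lam al f k = al k * (rho_of lam k - rho_t p k) * f k 0 + (al k - alpha_t p k) * f k 1"

definition hh :: "nat \<Rightarrow> (nat \<Rightarrow> complex) \<Rightarrow> (nat \<Rightarrow> complex) \<Rightarrow> (nat \<Rightarrow> nat \<Rightarrow> complex) \<Rightarrow> nat \<Rightarrow> real \<Rightarrow> complex" where
  "hh p lam al f k t = dd p lam al f k * cs (rho_of lam k) t
      + alpha_t p k * f k 1 * (cs (rho_of lam k) t - cs (rho_t p k) t)"

lemma Dt_eq: "Dt x (r1\<^sup>2) (r2\<^sup>2) = integral {0..x} (\<lambda>t. cs r1 t * cs r2 t)"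
  by (simp add: Dt_def cs_def cos_csqrt_sq)

lemma cont_hh[continuous_intros]: "continuous_on S (hh p lam al f k)"
  unfolding hh_def by (intro continuous_intros)

lemma QT_term_eq:
  "QT_term p lam al x f n i k = integral {0..x} (\<lambda>t. cs (rhoI p lam n i) t * hh p lam al f k t)"
proof -
  let ?r = "rhoI p lam n i"
  have i1: "(\<lambda>t. cs ?r t * cs (rho_of lam k) t) integrable_on {0..x}"
    by (intro integrable_continuous_interval continuous_intros)
  have i2: "(\<lambda>t. cs ?r t * cs (rho_t p k) t) integrable_on {0..x}"
    by (intro integrable_continuous_interval continuous_intros)
  have eq: "cs ?r t * hh p lam al f k t =
     (al k * ((rho_of lam k - rho_t p k) * f k 0 + f k 1)) * (cs ?r t * cs (rho_of lam k) t)
     - (alpha_t p k * f k 1) * (cs ?r t * cs (rho_t p k) t)" for t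
    by (simp add: hh_def dd_def algebra_simps)
  have "integral {0..x} (\<lambda>t. cs ?r t * hh p lam al f k t) =
     (al k * ((rho_of lam k - rho_t p k) * f k 0 + f k 1)) * integral {0..x} (\<lambda>t. cs ?r t * cs (rho_of lam k) t)
     - (alpha_t p k * f k 1) * integral {0..x} (\<lambda>t. cs ?r t * cs (rho_t p k) t)"
    unfolding eq
    by (simp add: integral_diff[OF integrable_on_mult_right[OF i1] integrable_on_mult_right[OF i2]] integral_mult_right)
  then show ?thesis
    by (simp add: QT_term_def Qt_def alI_def rhoI_def Dt_eq algebra_simps)
qed

lemma QT_sum_eq:
  assumes "finite K"
  shows "(\<Sum>k\<in>K. QT_term p lam al x f n i k) = integral {0..x} (\<lambda>t. cs (rhoI p lam n i) t * (\<Sum>k\<in>K. hh p lam al f k t))"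
proof -
  have "(\<Sum>k\<in>K. QT_term p lam al x f n i k) = (\<Sum>k\<in>K. integral {0..x} (\<lambda>t. cs (rhoI p lam n i) t * hh p lam al f k t))"
    by (simp add: QT_term_eq)
  also have "\<dots> = integral {0..x} (\<lambda>t. \<Sum>k\<in>K. cs (rhoI p lam n i) t * hh p lam al f k t)"
    by (rule integral_sum[symmetric, OF assms]) (auto intro!: integrable_continuous_interval continuous_intros)
  finally show ?thesis by (simp add: sum_distrib_left)
qed



lemma data_pt:
  assumes B: "in_B p \<Omega> lam al" and k: "k \<ge> 1"
  shows "cmod (rho_of lam k - rho_t p k) \<le> xi p lam al k" "cmod (al k - alpha_t p k) \<le> xi p lam al k"
    "xi p lam al k \<le> \<Omega>" "\<bar>Im (rho_of lam k)\<bar> \<le> \<Omega>" "cmod (al k) \<le> 1 + \<Omega>" "\<Omega> \<ge> 0"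
proof -
  show a: "cmod (rho_of lam k - rho_t p k) \<le> xi p lam al k" "cmod (al k - alpha_t p k) \<le> xi p lam al k"
    by (auto simp: xi_def)
  show x: "xi p lam al k \<le> \<Omega>" using B_facts(4)[OF B k] .
  have "\<bar>Im (rho_of lam k)\<bar> = \<bar>Im (rho_of lam k - rho_t p k)\<bar>" by simp
  also have "\<dots> \<le> cmod (rho_of lam k - rho_t p k)" by (rule abs_Im_le_cmod)
  finally show "\<bar>Im (rho_of lam k)\<bar> \<le> \<Omega>" using a x by linarith
  have "cmod (al k) \<le> cmod (alpha_t p k) + cmod (al k - alpha_t p k)"
    by (metis add.commute diff_add_cancel norm_triangle_ineq)
  then show "cmod (al k) \<le> 1 + \<Omega>" using alpha_t_le1[of p k] a x by linarith
  show "\<Omega> \<ge> 0" using x xi_nonneg[of p lam al k] by linarith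
qed

lemma dd_bound:
  assumes B: "in_B p \<Omega> lam al" and k: "k \<ge> 1" and f: "\<And>i. i \<le> 1 \<Longrightarrow> cmod (f k i) \<le> M"
  shows "cmod (dd p lam al f k) \<le> (2 + \<Omega>) * M * xi p lam al k"
proof -
  note d = data_pt[OF B k]
  have M0: "M \<ge> 0" using f[of 0] by (meson norm_ge_zero order_trans le0)
  have "cmod (dd p lam al f k) \<le> cmod (al k) * cmod (rho_of lam k - rho_t p k) * cmod (f k 0)
        + cmod (al k - alpha_t p k) * cmod (f k 1)"
    unfolding dd_def by (metis norm_mult norm_triangle_ineq)
  also have "\<dots> \<le> (1 + \<Omega>) * xi p lam al k * M + xi p lam al k * M"
    using d f[of 0] f[of 1] M0 xi_nonneg[of p lam al k]
    by (intro add_mono mult_mono) auto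
  finally show ?thesis by (simp add: algebra_simps)
qed

lemma hh_decomp: "hh p lam al f k t =
   dd p lam al f k * cs (rho_t p k) t + (- (alpha_t p k * f k 1 * (rho_of lam k - rho_t p k))) * of_real t * sn (rho_t p k) t
   + (dd p lam al f k * (cs (rho_of lam k) t - cs (rho_t p k) t)
      + alpha_t p k * f k 1 * (cs (rho_of lam k) t - cs (rho_t p k) t + sn (rho_t p k) t * (rho_of lam k - rho_t p k) * of_real t))"
  by (simp add: hh_def algebra_simps)

lemma H_bound:
  assumes B: "in_B p \<Omega> lam al" and f: "\<And>k i. k \<ge> 1 \<Longrightarrow> i \<le> 1 \<Longrightarrow> cmod (f k i) \<le> M"
    and M0: "M \<ge> 0" and K: "finite K" "\<And>k. k\<in>K \<Longrightarrow> k \<ge> 1"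
  shows "integral {0..pi} (\<lambda>t. (cmod (\<Sum>k\<in>K. hh p lam al f k t))\<^sup>2) \<le> 200*(real p+1) *
     ((2+\<Omega>)\<^sup>2*M\<^sup>2*(\<Sum>k\<in>K. (xi p lam al k)\<^sup>2) + M\<^sup>2*(\<Sum>k\<in>K. (xi p lam al k)\<^sup>2)
      + (M*exp(\<Omega>*pi)*pi*(2+\<Omega>+pi)*(\<Sum>k\<in>K. (xi p lam al k)\<^sup>2))\<^sup>2)"
proof -
  define E where "E = exp (\<Omega>*pi)"
  define \<xi> where "\<xi> k = xi p lam al k" for k
  define u where "u k = dd p lam al f k" for k
  define v where "v k = - (alpha_t p k * f k 1 * (rho_of lam k - rho_t p k))" for k
  define w where "w k t = dd p lam al f k * (cs (rho_of lam k) t - cs (rho_t p k) t)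
      + alpha_t p k * f k 1 * (cs (rho_of lam k) t - cs (rho_t p k) t + sn (rho_t p k) t * (rho_of lam k - rho_t p k) * of_real t)" for k t
  define W where "W k = M * E * pi * (2+\<Omega>+pi) * (\<xi> k)\<^sup>2" for k
  have Wb: "cmod (w k t) \<le> W k" if k: "k \<in> K" and t: "t \<in> {0..pi}" for k t
  proof -
    have k1: "k \<ge> 1" using K k by auto
    note d = data_pt[OF B k1]
    have dd: "cmod (u k) \<le> (2 + \<Omega>) * M * \<xi> k" unfolding u_def \<xi>_def by (rule dd_bound[OF B k1]) (use f k1 in auto)
    have l: "cmod (cs (rho_of lam k) t - cs (rho_t p k) t) \<le> E * pi * \<xi> k"
      using cs_lip'[of "rho_of lam k" \<Omega> "rho_t p k" t] d t by (simp add: E_def \<xi>_def) (smt (verit) mult_left_mono mult_nonneg_nonneg exp_ge_zero pi_ge_zero)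
    have ta: "cmod (cs (rho_of lam k) t - cs (rho_t p k) t + sn (rho_t p k) t * (rho_of lam k - rho_t p k) * of_real t)
        \<le> E * pi\<^sup>2 * (\<xi> k)\<^sup>2"
    proof -
      have t1: "cmod (cs (rho_of lam k) t - cs (rho_t p k) t + sn (rho_t p k) t * (rho_of lam k - rho_t p k) * of_real t)
         \<le> E * pi\<^sup>2 * (cmod (rho_of lam k - rho_t p k))\<^sup>2"
        unfolding E_def by (rule cs_taylor') (use d t in auto)
      have "(cmod (rho_of lam k - rho_t p k))\<^sup>2 \<le> (\<xi> k)\<^sup>2" unfolding \<xi>_def by (rule power_mono) (use d in auto)
      then have "E * pi\<^sup>2 * (cmod (rho_of lam k - rho_t p k))\<^sup>2 \<le> E * pi\<^sup>2 * (\<xi> k)\<^sup>2"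
        by (rule mult_left_mono) (simp add: E_def)
      with t1 show ?thesis by linarith
    qed
    have "cmod (w k t) \<le> cmod (u k) * cmod (cs (rho_of lam k) t - cs (rho_t p k) t)
       + cmod (alpha_t p k) * cmod (f k 1) * cmod (cs (rho_of lam k) t - cs (rho_t p k) t + sn (rho_t p k) t * (rho_of lam k - rho_t p k) * of_real t)"
      unfolding w_def u_def by (metis norm_mult norm_triangle_ineq)
    also have "\<dots> \<le> ((2 + \<Omega>) * M * \<xi> k) * (E * pi * \<xi> k) + 1 * M * (E * pi\<^sup>2 * (\<xi> k)\<^sup>2)"
      using alpha_t_le1[of p k] f[OF k1, of 1] dd l ta d(6) xi_nonneg[of p lam al k]
      by (intro add_mono mult_mono) (auto simp: M0 \<xi>_def)
    also have "\<dots> = W k" by (simp add: W_def power2_eq_square algebra_simps)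
    finally show ?thesis .
  qed
  have wc: "continuous_on {0..pi} (w k)" for k unfolding w_def by (intro continuous_intros)
  have eq: "(\<Sum>k\<in>K. hh p lam al f k t) = (\<Sum>k\<in>K. u k * cs (rho_t p k) t + v k * of_real t * sn (rho_t p k) t + w k t)" for t
    by (simp add: hh_decomp u_def v_def w_def)
  have "integral {0..pi} (\<lambda>t. (cmod (\<Sum>k\<in>K. hh p lam al f k t))\<^sup>2)
     \<le> 200 * (real p + 1) * ((\<Sum>k\<in>K. (cmod (u k))\<^sup>2) + (\<Sum>k\<in>K. (cmod (v k))\<^sup>2) + (\<Sum>k\<in>K. W k)\<^sup>2)"
    unfolding eq by (rule synth[OF K(1) Wb wc])
  also have "\<dots> \<le> 200*(real p+1) *
     ((2+\<Omega>)\<^sup>2*M\<^sup>2*(\<Sum>k\<in>K. (\<xi> k)\<^sup>2) + M\<^sup>2*(\<Sum>k\<in>K. (\<xi> k)\<^sup>2) + (M*E*pi*(2+\<Omega>+pi)*(\<Sum>k\<in>K. (\<xi> k)\<^sup>2))\<^sup>2)"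
  proof -
    have "(\<Sum>k\<in>K. (cmod (u k))\<^sup>2) \<le> (\<Sum>k\<in>K. (2+\<Omega>)\<^sup>2*M\<^sup>2*(\<xi> k)\<^sup>2)"
    proof (rule sum_mono)
      fix k assume k: "k \<in> K"
      then have k1: "k \<ge> 1" using K by auto
      have "cmod (u k) \<le> (2 + \<Omega>) * M * \<xi> k" unfolding u_def \<xi>_def by (rule dd_bound[OF B k1]) (use f k1 in auto)
      then have "(cmod (u k))\<^sup>2 \<le> ((2 + \<Omega>) * M * \<xi> k)\<^sup>2" by (rule power_mono) simp
      then show "(cmod (u k))\<^sup>2 \<le> (2+\<Omega>)\<^sup>2*M\<^sup>2*(\<xi> k)\<^sup>2" by (simp add: power_mult_distrib)
    qed
    also have "\<dots> = (2+\<Omega>)\<^sup>2*M\<^sup>2*(\<Sum>k\<in>K. (\<xi> k)\<^sup>2)" by (simp add: sum_distrib_left)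
    finally have 1: "(\<Sum>k\<in>K. (cmod (u k))\<^sup>2) \<le> (2+\<Omega>)\<^sup>2*M\<^sup>2*(\<Sum>k\<in>K. (\<xi> k)\<^sup>2)" .
    have "(\<Sum>k\<in>K. (cmod (v k))\<^sup>2) \<le> (\<Sum>k\<in>K. M\<^sup>2*(\<xi> k)\<^sup>2)"
    proof (rule sum_mono)
      fix k assume k: "k \<in> K"
      then have k1: "k \<ge> 1" using K by auto
      note d = data_pt[OF B k1]
      have "cmod (v k) \<le> 1 * M * \<xi> k"
        unfolding v_def \<xi>_def norm_minus_cancel norm_mult
        using alpha_t_le1[of p k] f[OF k1, of 1] d(1) M0 by (intro mult_mono) auto
      then have "(cmod (v k))\<^sup>2 \<le> (M * \<xi> k)\<^sup>2" by (intro power_mono) auto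
      then show "(cmod (v k))\<^sup>2 \<le> M\<^sup>2*(\<xi> k)\<^sup>2" by (simp add: power_mult_distrib)
    qed
    also have "\<dots> = M\<^sup>2*(\<Sum>k\<in>K. (\<xi> k)\<^sup>2)" by (simp add: sum_distrib_left)
    finally have 2: "(\<Sum>k\<in>K. (cmod (v k))\<^sup>2) \<le> M\<^sup>2*(\<Sum>k\<in>K. (\<xi> k)\<^sup>2)" .
    have 3: "(\<Sum>k\<in>K. W k) = M*E*pi*(2+\<Omega>+pi)*(\<Sum>k\<in>K. (\<xi> k)\<^sup>2)"
      by (simp add: W_def sum_distrib_left)
    show ?thesis unfolding 3 by (intro mult_left_mono add_mono 1 2) auto
  qed
  finally show ?thesis by (simp add: E_def \<xi>_def)
qed



lemma hh_diff_decomp: "hh p lam1 al1 f k t - hh p lam2 al2 f k t =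
   (dd p lam1 al1 f k - dd p lam2 al2 f k) * cs (rho_t p k) t
   + (- (alpha_t p k * f k 1 * (rho_of lam1 k - rho_of lam2 k))) * of_real t * sn (rho_t p k) t
   + ((dd p lam1 al1 f k - dd p lam2 al2 f k) * (cs (rho_of lam1 k) t - cs (rho_t p k) t)
      + dd p lam2 al2 f k * (cs (rho_of lam1 k) t - cs (rho_of lam2 k) t)
      + alpha_t p k * f k 1 * (cs (rho_of lam1 k) t - cs (rho_of lam2 k) t
            + (rho_of lam1 k - rho_of lam2 k) * of_real t * sn (rho_t p k) t))"
  by (simp add: hh_def algebra_simps)

lemma norm3: "cmod (a + b + c) \<le> cmod a + cmod b + cmod c"
  by (rule order_trans[OF norm_triangle_ineq add_right_mono[OF norm_triangle_ineq]])

lemma norm2: "cmod (a + b) \<le> cmod a + cmod b"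
  by (rule norm_triangle_ineq)

lemma dd_diff_bound:
  assumes B1: "in_B p \<Omega> lam1 al1" and B2: "in_B p \<Omega> lam2 al2" and k: "k \<ge> 1"
    and f: "\<And>i. i \<le> 1 \<Longrightarrow> cmod (f k i) \<le> M"
  shows "cmod (dd p lam1 al1 f k - dd p lam2 al2 f k) \<le> (2 + \<Omega>) * M * (cmod (rho_of lam1 k - rho_of lam2 k) + cmod (al1 k - al2 k))"
proof -
  note d1 = data_pt[OF B1 k] and d2 = data_pt[OF B2 k]
  have M0: "M \<ge> 0" using f[of 0] by (meson norm_ge_zero order_trans le0)
  define dr where "dr = cmod (rho_of lam1 k - rho_of lam2 k)"
  define da where "da = cmod (al1 k - al2 k)"
  have eq: "dd p lam1 al1 f k - dd p lam2 al2 f k =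
     ((al1 k - al2 k) * (rho_of lam1 k - rho_t p k) + al2 k * (rho_of lam1 k - rho_of lam2 k)) * f k 0
     + (al1 k - al2 k) * f k 1"
    by (simp add: dd_def algebra_simps)
  have "cmod (dd p lam1 al1 f k - dd p lam2 al2 f k) \<le>
     (cmod (al1 k - al2 k) * cmod (rho_of lam1 k - rho_t p k) + cmod (al2 k) * cmod (rho_of lam1 k - rho_of lam2 k)) * cmod (f k 0)
     + cmod (al1 k - al2 k) * cmod (f k 1)"
    unfolding eq
  proof (rule order_trans[OF norm2 add_mono])
    show "cmod (((al1 k - al2 k) * (rho_of lam1 k - rho_t p k) + al2 k * (rho_of lam1 k - rho_of lam2 k)) * f k 0)
      \<le> (cmod (al1 k - al2 k) * cmod (rho_of lam1 k - rho_t p k) + cmod (al2 k) * cmod (rho_of lam1 k - rho_of lam2 k)) * cmod (f k 0)"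
      unfolding norm_mult[of _ "f k 0"] by (rule mult_right_mono[OF order_trans[OF norm2]]) (auto simp: norm_mult)
  qed (simp add: norm_mult)
  also have "\<dots> \<le> (da * \<Omega> + (1 + \<Omega>) * dr) * M + da * M"
    using d1 d2 f[of 0] f[of 1] M0 unfolding da_def dr_def
    by (intro add_mono mult_mono) (auto intro: order_trans)
  also have "\<dots> \<le> (2 + \<Omega>) * M * (dr + da)"
  proof -
    have "0 \<le> da * M" "0 \<le> dr * M" using M0 by (simp_all add: da_def dr_def)
    then have "da * \<Omega> * M \<le> (1 + \<Omega>) * da * M" by (simp add: algebra_simps)
    then show ?thesis using \<open>0 \<le> dr * M\<close> by (simp add: algebra_simps)
  qed
  finally show ?thesis by (simp add: dr_def da_def)
qed

lemma H_diff_bound: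
  assumes B1: "in_B p \<Omega> lam1 al1" and B2: "in_B p \<Omega> lam2 al2"
    and f: "\<And>k i. k \<ge> 1 \<Longrightarrow> i \<le> 1 \<Longrightarrow> cmod (f k i) \<le> M"
    and M0: "M \<ge> 0" and K: "finite K" "\<And>k. k\<in>K \<Longrightarrow> k \<ge> 1"
  defines "\<delta> \<equiv> \<lambda>k. cmod (rho_of lam1 k - rho_of lam2 k) + cmod (al1 k - al2 k)"
  shows "integral {0..pi} (\<lambda>t. (cmod ((\<Sum>k\<in>K. hh p lam1 al1 f k t) - (\<Sum>k\<in>K. hh p lam2 al2 f k t)))\<^sup>2) \<le> 200*(real p+1) *
     ((2+\<Omega>)\<^sup>2*M\<^sup>2*(\<Sum>k\<in>K. (\<delta> k)\<^sup>2) + M\<^sup>2*(\<Sum>k\<in>K. (\<delta> k)\<^sup>2)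
      + (M*exp(\<Omega>*pi)*pi*(2+\<Omega>+2*pi)*(\<Sum>k\<in>K. \<delta> k * (xi p lam1 al1 k + xi p lam2 al2 k)))\<^sup>2)"
proof -
  define E where "E = exp (\<Omega>*pi)"
  define \<xi>1 where "\<xi>1 k = xi p lam1 al1 k" for k
  define \<xi>2 where "\<xi>2 k = xi p lam2 al2 k" for k
  define u where "u k = dd p lam1 al1 f k - dd p lam2 al2 f k" for k
  define v where "v k = - (alpha_t p k * f k 1 * (rho_of lam1 k - rho_of lam2 k))" for k
  define w where "w k t = (dd p lam1 al1 f k - dd p lam2 al2 f k) * (cs (rho_of lam1 k) t - cs (rho_t p k) t)
      + dd p lam2 al2 f k * (cs (rho_of lam1 k) t - cs (rho_of lam2 k) t)
      + alpha_t p k * f k 1 * (cs (rho_of lam1 k) t - cs (rho_of lam2 k) t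
            + (rho_of lam1 k - rho_of lam2 k) * of_real t * sn (rho_t p k) t)" for k t
  define W where "W k = M*E*pi*(2+\<Omega>+2*pi) * (\<delta> k * (\<xi>1 k + \<xi>2 k))" for k
  have E0: "E \<ge> 0" by (simp add: E_def)
  have Wb: "cmod (w k t) \<le> W k" if k: "k \<in> K" and t: "t \<in> {0..pi}" for k t
  proof -
    have k1: "k \<ge> 1" using K k by auto
    note d1 = data_pt[OF B1 k1] and d2 = data_pt[OF B2 k1]
    define r where "r = cmod (rho_of lam1 k - rho_of lam2 k)"
    have r0: "r \<ge> 0" "r \<le> \<delta> k" by (auto simp: r_def \<delta>_def)
    have rx: "r \<le> \<xi>1 k + \<xi>2 k"
    proof -
      have "r \<le> cmod (rho_of lam1 k - rho_t p k) + cmod (rho_of lam2 k - rho_t p k)"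
      proof -
        have "rho_of lam1 k - rho_of lam2 k = (rho_of lam1 k - rho_t p k) - (rho_of lam2 k - rho_t p k)" by simp
        then show ?thesis unfolding r_def by (metis norm_triangle_ineq4)
      qed
      then show ?thesis using d1(1) d2(1) by (simp add: \<xi>1_def \<xi>2_def)
    qed
    have x0: "\<xi>1 k \<ge> 0" "\<xi>2 k \<ge> 0" by (simp_all add: \<xi>1_def \<xi>2_def xi_nonneg)
    have du: "cmod (u k) \<le> (2 + \<Omega>) * M * \<delta> k"
      unfolding u_def \<delta>_def by (rule dd_diff_bound[OF B1 B2 k1]) (use f k1 in auto)
    have d2b: "cmod (dd p lam2 al2 f k) \<le> (2 + \<Omega>) * M * \<xi>2 k"
      unfolding \<xi>2_def by (rule dd_bound[OF B2 k1]) (use f k1 in auto)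
    have l1: "cmod (cs (rho_of lam1 k) t - cs (rho_t p k) t) \<le> E * pi * \<xi>1 k"
    proof -
      have "cmod (cs (rho_of lam1 k) t - cs (rho_t p k) t) \<le> E * pi * cmod (rho_of lam1 k - rho_t p k)"
        unfolding E_def by (rule cs_lip') (use d1 t in auto)
      also have "\<dots> \<le> E * pi * \<xi>1 k" using d1 E0 by (intro mult_left_mono) (auto simp: \<xi>1_def)
      finally show ?thesis .
    qed
    have l12: "cmod (cs (rho_of lam1 k) t - cs (rho_of lam2 k) t) \<le> E * pi * \<delta> k"
    proof -
      have "cmod (cs (rho_of lam1 k) t - cs (rho_of lam2 k) t) \<le> E * pi * r"
        unfolding E_def r_def by (rule cs_lip') (use d1 d2 t in auto)
      also have "\<dots> \<le> E * pi * \<delta> k" using r0 E0 by (intro mult_left_mono) auto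
      finally show ?thesis .
    qed
    have ta: "cmod (cs (rho_of lam1 k) t - cs (rho_of lam2 k) t
            + (rho_of lam1 k - rho_of lam2 k) * of_real t * sn (rho_t p k) t) \<le> E * pi\<^sup>2 * (\<delta> k * (\<xi>1 k + \<xi>2 k)) + E * pi\<^sup>2 * (\<delta> k * \<xi>2 k)"
    proof -
      have eq: "cs (rho_of lam1 k) t - cs (rho_of lam2 k) t + (rho_of lam1 k - rho_of lam2 k) * of_real t * sn (rho_t p k) t
        = (cs (rho_of lam1 k) t - cs (rho_of lam2 k) t + sn (rho_of lam2 k) t * (rho_of lam1 k - rho_of lam2 k) * of_real t)
          + (rho_of lam1 k - rho_of lam2 k) * of_real t * (sn (rho_t p k) t - sn (rho_of lam2 k) t)"
        by (simp add: algebra_simps)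
      have a: "cmod (cs (rho_of lam1 k) t - cs (rho_of lam2 k) t + sn (rho_of lam2 k) t * (rho_of lam1 k - rho_of lam2 k) * of_real t)
         \<le> E * pi\<^sup>2 * r\<^sup>2" unfolding E_def r_def by (rule cs_taylor') (use d1 d2 t in auto)
      have "r\<^sup>2 \<le> \<delta> k * (\<xi>1 k + \<xi>2 k)" unfolding power2_eq_square using r0 rx by (intro mult_mono) auto
      then have a': "E * pi\<^sup>2 * r\<^sup>2 \<le> E * pi\<^sup>2 * (\<delta> k * (\<xi>1 k + \<xi>2 k))" using E0 by (intro mult_left_mono) auto
      have sl: "cmod (sn (rho_t p k) t - sn (rho_of lam2 k) t) \<le> E * pi * \<xi>2 k"
      proof -
        have "cmod (sn (rho_t p k) t - sn (rho_of lam2 k) t) \<le> E * pi * cmod (rho_t p k - rho_of lam2 k)"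
          unfolding E_def by (rule sn_lip') (use d2 t in auto)
        also have "\<dots> \<le> E * pi * \<xi>2 k" using d2 E0 by (intro mult_left_mono) (auto simp: \<xi>2_def norm_minus_commute)
        finally show ?thesis .
      qed
      have "cmod ((rho_of lam1 k - rho_of lam2 k) * of_real t * (sn (rho_t p k) t - sn (rho_of lam2 k) t))
          = r * t * cmod (sn (rho_t p k) t - sn (rho_of lam2 k) t)" using t by (simp add: norm_mult r_def)
      also have "\<dots> \<le> \<delta> k * pi * (E * pi * \<xi>2 k)"
        using r0 t sl by (intro mult_mono) auto
      also have "\<dots> = E * pi\<^sup>2 * (\<delta> k * \<xi>2 k)" by (simp add: power2_eq_square algebra_simps)
      finally have b: "cmod ((rho_of lam1 k - rho_of lam2 k) * of_real t * (sn (rho_t p k) t - sn (rho_of lam2 k) t))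
          \<le> E * pi\<^sup>2 * (\<delta> k * \<xi>2 k)" .
      show ?thesis unfolding eq by (rule order_trans[OF norm2 add_mono[OF order_trans[OF a a'] b]])
    qed
    have "cmod (w k t) \<le> cmod (u k) * cmod (cs (rho_of lam1 k) t - cs (rho_t p k) t)
       + cmod (dd p lam2 al2 f k) * cmod (cs (rho_of lam1 k) t - cs (rho_of lam2 k) t)
       + cmod (alpha_t p k) * cmod (f k 1) * cmod (cs (rho_of lam1 k) t - cs (rho_of lam2 k) t
            + (rho_of lam1 k - rho_of lam2 k) * of_real t * sn (rho_t p k) t)"
      unfolding w_def u_def by (rule order_trans[OF norm3]) (simp add: norm_mult)
    also have "\<dots> \<le> ((2 + \<Omega>) * M * \<delta> k) * (E * pi * \<xi>1 k) + ((2 + \<Omega>) * M * \<xi>2 k) * (E * pi * \<delta> k)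
        + 1 * M * (E * pi\<^sup>2 * (\<delta> k * (\<xi>1 k + \<xi>2 k)) + E * pi\<^sup>2 * (\<delta> k * \<xi>2 k))"
      using alpha_t_le1[of p k] f[OF k1, of 1] du d2b l1 l12 ta d1(6) x0 r0 M0
      by (intro add_mono mult_mono) auto
    also have "\<dots> = M*E*pi*((2+\<Omega>)*(\<delta> k * (\<xi>1 k + \<xi>2 k)) + pi * (\<delta> k * (\<xi>1 k + \<xi>2 k)) + pi * (\<delta> k * \<xi>2 k))"
      by (simp add: power2_eq_square algebra_simps)
    also have "\<dots> \<le> W k"
    proof -
      have "pi * (\<delta> k * \<xi>2 k) \<le> pi * (\<delta> k * (\<xi>1 k + \<xi>2 k))"
        using x0 r0 by (intro mult_left_mono) auto
      then have "(2+\<Omega>)*(\<delta> k * (\<xi>1 k + \<xi>2 k)) + pi * (\<delta> k * (\<xi>1 k + \<xi>2 k)) + pi * (\<delta> k * \<xi>2 k)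
          \<le> (2+\<Omega>+2*pi) * (\<delta> k * (\<xi>1 k + \<xi>2 k))" by (simp add: algebra_simps)
      then show ?thesis unfolding W_def using M0 E0 by (simp add: mult.assoc mult_left_mono)
    qed
    finally show ?thesis .
  qed
  have wc: "continuous_on {0..pi} (w k)" for k unfolding w_def by (intro continuous_intros)
  have eq: "(\<Sum>k\<in>K. hh p lam1 al1 f k t) - (\<Sum>k\<in>K. hh p lam2 al2 f k t) = (\<Sum>k\<in>K. u k * cs (rho_t p k) t + v k * of_real t * sn (rho_t p k) t + w k t)" for t
    by (simp add: sum_subtractf[symmetric] hh_diff_decomp u_def v_def w_def)
  have "integral {0..pi} (\<lambda>t. (cmod ((\<Sum>k\<in>K. hh p lam1 al1 f k t) - (\<Sum>k\<in>K. hh p lam2 al2 f k t)))\<^sup>2)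
     \<le> 200 * (real p + 1) * ((\<Sum>k\<in>K. (cmod (u k))\<^sup>2) + (\<Sum>k\<in>K. (cmod (v k))\<^sup>2) + (\<Sum>k\<in>K. W k)\<^sup>2)"
    unfolding eq by (rule synth[OF K(1) Wb wc])
  also have "\<dots> \<le> 200*(real p+1) *
     ((2+\<Omega>)\<^sup>2*M\<^sup>2*(\<Sum>k\<in>K. (\<delta> k)\<^sup>2) + M\<^sup>2*(\<Sum>k\<in>K. (\<delta> k)\<^sup>2) + (M*E*pi*(2+\<Omega>+2*pi)*(\<Sum>k\<in>K. \<delta> k * (\<xi>1 k + \<xi>2 k)))\<^sup>2)"
  proof -
    have "(\<Sum>k\<in>K. (cmod (u k))\<^sup>2) \<le> (\<Sum>k\<in>K. (2+\<Omega>)\<^sup>2*M\<^sup>2*(\<delta> k)\<^sup>2)"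
    proof (rule sum_mono)
      fix k assume k: "k \<in> K"
      then have k1: "k \<ge> 1" using K by auto
      have "cmod (u k) \<le> (2 + \<Omega>) * M * \<delta> k"
        unfolding u_def \<delta>_def by (rule dd_diff_bound[OF B1 B2 k1]) (use f k1 in auto)
      then have "(cmod (u k))\<^sup>2 \<le> ((2 + \<Omega>) * M * \<delta> k)\<^sup>2" by (rule power_mono) simp
      then show "(cmod (u k))\<^sup>2 \<le> (2+\<Omega>)\<^sup>2*M\<^sup>2*(\<delta> k)\<^sup>2" by (simp add: power_mult_distrib)
    qed
    also have "\<dots> = (2+\<Omega>)\<^sup>2*M\<^sup>2*(\<Sum>k\<in>K. (\<delta> k)\<^sup>2)" by (simp add: sum_distrib_left)
    finally have 1: "(\<Sum>k\<in>K. (cmod (u k))\<^sup>2) \<le> (2+\<Omega>)\<^sup>2*M\<^sup>2*(\<Sum>k\<in>K. (\<delta> k)\<^sup>2)" .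
    have "(\<Sum>k\<in>K. (cmod (v k))\<^sup>2) \<le> (\<Sum>k\<in>K. M\<^sup>2*(\<delta> k)\<^sup>2)"
    proof (rule sum_mono)
      fix k assume k: "k \<in> K"
      then have k1: "k \<ge> 1" using K by auto
      have "cmod (v k) \<le> 1 * M * \<delta> k"
        unfolding v_def \<delta>_def norm_minus_cancel norm_mult
        using alpha_t_le1[of p k] f[OF k1, of 1] M0 by (intro mult_mono) auto
      then have "(cmod (v k))\<^sup>2 \<le> (M * \<delta> k)\<^sup>2" by (intro power_mono) auto
      then show "(cmod (v k))\<^sup>2 \<le> M\<^sup>2*(\<delta> k)\<^sup>2" by (simp add: power_mult_distrib)
    qed
    also have "\<dots> = M\<^sup>2*(\<Sum>k\<in>K. (\<delta> k)\<^sup>2)" by (simp add: sum_distrib_left)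
    finally have 2: "(\<Sum>k\<in>K. (cmod (v k))\<^sup>2) \<le> M\<^sup>2*(\<Sum>k\<in>K. (\<delta> k)\<^sup>2)" .
    have 3: "(\<Sum>k\<in>K. W k) = M*E*pi*(2+\<Omega>+2*pi)*(\<Sum>k\<in>K. \<delta> k * (\<xi>1 k + \<xi>2 k))"
      by (simp add: W_def sum_distrib_left)
    show ?thesis unfolding 3 by (intro mult_left_mono add_mono 1 2) auto
  qed
  finally show ?thesis by (simp add: E_def \<xi>1_def \<xi>2_def)
qed



lemma L2_const:
  fixes u :: "real \<Rightarrow> complex"
  assumes uc: "continuous_on {0..x} u" and x: "0 \<le> x" "x \<le> pi" and b: "\<And>t. t \<in> {0..x} \<Longrightarrow> cmod (u t) \<le> c"
  shows "integral {0..x} (\<lambda>t. (cmod (u t))\<^sup>2) \<le> pi * c\<^sup>2"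
proof -
  have c0: "c \<ge> 0" using b[of 0] x by (auto intro: order_trans[OF norm_ge_zero])
  have "integral {0..x} (\<lambda>t. (cmod (u t))\<^sup>2) \<le> integral {0..x} (\<lambda>t. c\<^sup>2)"
    by (rule integral_le) (auto intro!: integrable_continuous_real continuous_intros uc power_mono b)
  also have "\<dots> = x * c\<^sup>2" using x by simp
  also have "\<dots> \<le> pi * c\<^sup>2" using x by (intro mult_right_mono) auto
  finally show ?thesis .
qed

lemma L2_sub:
  fixes g :: "real \<Rightarrow> complex"
  assumes gc: "continuous_on {0..pi} g" and x: "0 \<le> x" "x \<le> pi"
  shows "integral {0..x} (\<lambda>t. (cmod (g t))\<^sup>2) \<le> integral {0..pi} (\<lambda>t. (cmod (g t))\<^sup>2)"
proof (rule integral_subset_le)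
  have gc': "continuous_on {0..x} g" by (rule continuous_on_subset[OF gc]) (use x in auto)
  show "(\<lambda>t. (cmod (g t))\<^sup>2) integrable_on {0..x}" by (intro integrable_continuous_real continuous_intros gc')
  show "(\<lambda>t. (cmod (g t))\<^sup>2) integrable_on {0..pi}" by (intro integrable_continuous_real continuous_intros gc)
qed (use x in auto)

lemma L2_nonneg:
  fixes g :: "real \<Rightarrow> complex"
  assumes gc: "continuous_on {a..b} g"
  shows "integral {a..b} (\<lambda>t. (cmod (g t))\<^sup>2) \<ge> 0"
  by (rule integral_nonneg) (auto intro!: integrable_continuous_real continuous_intros gc)

lemma CS_int_bound:
  fixes u g :: "real \<Rightarrow> complex"
  assumes uc: "continuous_on {0..x} u" and gc: "continuous_on {0..pi} g" and x: "0 \<le> x" "x \<le> pi"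
    and b: "\<And>t. t \<in> {0..x} \<Longrightarrow> cmod (u t) \<le> c"
  shows "(cmod (integral {0..x} (\<lambda>t. u t * g t)))\<^sup>2 \<le> pi * c\<^sup>2 * integral {0..pi} (\<lambda>t. (cmod (g t))\<^sup>2)"
proof -
  have gc': "continuous_on {0..x} g" by (rule continuous_on_subset[OF gc]) (use x in auto)
  have "(cmod (integral {0..x} (\<lambda>t. u t * g t)))\<^sup>2 \<le> integral {0..x} (\<lambda>t. (cmod (u t))\<^sup>2) * integral {0..x} (\<lambda>t. (cmod (g t))\<^sup>2)"
    by (rule CS_integral[OF uc gc'])
  also have "\<dots> \<le> (pi * c\<^sup>2) * integral {0..pi} (\<lambda>t. (cmod (g t))\<^sup>2)"
    by (intro mult_mono L2_const[OF uc x b] L2_sub[OF gc x] L2_nonneg gc') auto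
  finally show ?thesis .
qed

lemma sum_Suc_reindex: "(\<Sum>k\<in>Suc ` J. F k) = (\<Sum>j\<in>J. F (Suc j))"
  by (simp add: sum.reindex)

lemma QT_summable:
  assumes B: "in_B p \<Omega> lam al" and f: "\<And>k i. k \<ge> 1 \<Longrightarrow> i \<le> 1 \<Longrightarrow> cmod (f k i) \<le> M"
    and M0: "M \<ge> 0" and x: "0 \<le> x" "x \<le> pi"
  shows "summable (\<lambda>k. QT_term p lam al x f n i (Suc k))"
  unfolding summable_Cauchy
proof (intro allI impI)
  fix e :: real assume e: "e > 0"
  define c where "c = M * exp(\<Omega>*pi)*pi*(2+\<Omega>+pi)"
  define Kc where "Kc = 200*(real p+1) * ((2+\<Omega>)\<^sup>2*M\<^sup>2 + M\<^sup>2 + c\<^sup>2)"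
  define P where "P = integral {0..x} (\<lambda>t. (cmod (cs (rhoI p lam n i) t))\<^sup>2)"
  have P0: "P \<ge> 0" unfolding P_def by (intro L2_nonneg continuous_intros)
  have Kc0: "Kc \<ge> 0" unfolding Kc_def by simp
  define \<eta> where "\<eta> = min 1 (e\<^sup>2 / (P * Kc + 1))"
  have "P * Kc + 1 > 0" using P0 Kc0 by (simp add: add_nonneg_pos)
  then have eta0: "\<eta> > 0" using e by (simp add: \<eta>_def)
  obtain N where N: "\<And>m n. m \<ge> N \<Longrightarrow> norm (\<Sum>k\<in>{m..<n}. (xi p lam al (Suc k))\<^sup>2) < \<eta>"
    using B_facts(1)[OF B] eta0 unfolding summable_Cauchy by meson
  show "\<exists>N. \<forall>m\<ge>N. \<forall>n'. norm (\<Sum>k\<in>{m..<n'}. QT_term p lam al x f n i (Suc k)) < e"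
  proof (intro exI allI impI)
    fix m n' assume m: "m \<ge> N"
    define J where "J = {m..<n'}"
    define T where "T = (\<Sum>k\<in>J. (xi p lam al (Suc k))\<^sup>2)"
    have T0: "T \<ge> 0" by (simp add: T_def sum_nonneg)
    have Teta: "T < \<eta>" using N[OF m, of n'] T0 by (simp add: T_def J_def)
    have T1: "T \<le> 1" using Teta by (simp add: \<eta>_def)
    define H where "H t = (\<Sum>k\<in>Suc ` J. hh p lam al f k t)" for t
    have Hc: "continuous_on {0..pi} H" unfolding H_def by (intro continuous_intros)
    have "(\<Sum>k\<in>J. QT_term p lam al x f n i (Suc k)) = (\<Sum>k\<in>Suc ` J. QT_term p lam al x f n i k)"
      by (simp add: sum_Suc_reindex)
    also have "\<dots> = integral {0..x} (\<lambda>t. cs (rhoI p lam n i) t * H t)"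
      unfolding H_def by (rule QT_sum_eq) (simp add: J_def)
    finally have eqS: "(\<Sum>k\<in>J. QT_term p lam al x f n i (Suc k)) = integral {0..x} (\<lambda>t. cs (rhoI p lam n i) t * H t)" .
    have IH: "integral {0..pi} (\<lambda>t. (cmod (H t))\<^sup>2) \<le> Kc * T"
    proof -
      have "integral {0..pi} (\<lambda>t. (cmod (H t))\<^sup>2) \<le> 200*(real p+1) *
         ((2+\<Omega>)\<^sup>2*M\<^sup>2*(\<Sum>k\<in>Suc ` J. (xi p lam al k)\<^sup>2) + M\<^sup>2*(\<Sum>k\<in>Suc ` J. (xi p lam al k)\<^sup>2)
          + (M*exp(\<Omega>*pi)*pi*(2+\<Omega>+pi)*(\<Sum>k\<in>Suc ` J. (xi p lam al k)\<^sup>2))\<^sup>2)"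
        unfolding H_def by (rule H_bound[OF B f M0]) (auto simp: J_def)
      also have "\<dots> = 200*(real p+1) * ((2+\<Omega>)\<^sup>2*M\<^sup>2*T + M\<^sup>2*T + c\<^sup>2 * T\<^sup>2)"
        by (simp add: sum_Suc_reindex T_def c_def power_mult_distrib)
      also have "\<dots> \<le> 200*(real p+1) * ((2+\<Omega>)\<^sup>2*M\<^sup>2*T + M\<^sup>2*T + c\<^sup>2 * T)"
      proof -
        have "T\<^sup>2 \<le> T" using T0 T1 by (simp add: power2_eq_square mult_left_le)
        then show ?thesis by (intro mult_left_mono add_left_mono) (auto intro: mult_left_mono)
      qed
      also have "\<dots> = Kc * T" by (simp add: Kc_def algebra_simps)
      finally show ?thesis .
    qed
    have "(norm (\<Sum>k\<in>J. QT_term p lam al x f n i (Suc k)))\<^sup>2 \<le> P * integral {0..pi} (\<lambda>t. (cmod (H t))\<^sup>2)"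
    proof -
      have "(cmod (integral {0..x} (\<lambda>t. cs (rhoI p lam n i) t * H t)))\<^sup>2 \<le>
          integral {0..x} (\<lambda>t. (cmod (cs (rhoI p lam n i) t))\<^sup>2) * integral {0..x} (\<lambda>t. (cmod (H t))\<^sup>2)"
        by (rule CS_integral) (auto intro!: continuous_intros simp: H_def)
      also have "\<dots> \<le> P * integral {0..pi} (\<lambda>t. (cmod (H t))\<^sup>2)"
        unfolding P_def using P0 by (intro mult_left_mono L2_sub[OF Hc x]) (auto simp: P_def)
      finally show ?thesis unfolding eqS .
    qed
    also have "\<dots> \<le> P * (Kc * T)" by (rule mult_left_mono[OF IH P0])
    also have "\<dots> \<le> P * Kc * \<eta>" using P0 Kc0 Teta by (simp add: mult.assoc mult_left_mono)
    also have "\<dots> < e\<^sup>2"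
    proof -
      have "P * Kc * \<eta> \<le> P * Kc * (e\<^sup>2 / (P * Kc + 1))" using P0 Kc0 by (intro mult_left_mono) (auto simp: \<eta>_def)
      also have "\<dots> = (P * Kc * e\<^sup>2) / (P * Kc + 1)" by simp
      also have "\<dots> < e\<^sup>2"
      proof -
        have d: "P * Kc + 1 > 0" using P0 Kc0 by (simp add: add_nonneg_pos)
        have "P * Kc * e\<^sup>2 < e\<^sup>2 * (P * Kc + 1)" using e by (simp add: algebra_simps)
        then show ?thesis by (simp add: pos_divide_less_eq[OF d])
      qed
      finally show ?thesis .
    qed
    finally have "(norm (\<Sum>k\<in>J. QT_term p lam al x f n i (Suc k)))\<^sup>2 < e\<^sup>2" .
    then show "norm (\<Sum>k\<in>{m..<n'}. QT_term p lam al x f n i (Suc k)) < e"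
      using e unfolding J_def by (meson abs_le_square_iff less_le_not_le not_le norm_ge_zero power2_less_imp_less)
  qed
qed



definition KG :: "nat \<Rightarrow> real \<Rightarrow> real" where
  "KG p \<Omega> = 200*(real p+1)*((2+\<Omega>)\<^sup>2 + 1 + (exp(\<Omega>*pi)*pi*(2+\<Omega>+2*pi))\<^sup>2 * (4*\<Omega>\<^sup>2))"
definition KH :: "nat \<Rightarrow> real \<Rightarrow> real" where
  "KH p \<Omega> = 200*(real p+1)*((2+\<Omega>)\<^sup>2*\<Omega>\<^sup>2 + \<Omega>\<^sup>2 + (exp(\<Omega>*pi)*pi*(2+\<Omega>+pi)*\<Omega>\<^sup>2)\<^sup>2)"
definition C2 :: "nat \<Rightarrow> real \<Rightarrow> real" where
  "C2 p \<Omega> = (800*(real p+1) + 3*pi^3*(exp(\<Omega>*pi))\<^sup>2*\<Omega>\<^sup>2) * KG p \<Omega> + 3*pi^3*(exp(\<Omega>*pi))\<^sup>2 * KH p \<Omega> + 1"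

lemma sq3: "(cmod (a + b + c))\<^sup>2 \<le> 3 * ((cmod a)\<^sup>2 + (cmod b)\<^sup>2 + (cmod c)\<^sup>2)"
proof -
  have "(cmod (a + b + c))\<^sup>2 \<le> (cmod a + cmod b + cmod c)\<^sup>2"
    by (rule power_mono[OF norm3 norm_ge_zero])
  also have "\<dots> \<le> 3 * ((cmod a)\<^sup>2 + (cmod b)\<^sup>2 + (cmod c)\<^sup>2)"
  proof -
    have "0 \<le> (cmod a - cmod b)\<^sup>2 + (cmod a - cmod c)\<^sup>2 + (cmod b - cmod c)\<^sup>2" by simp
    then show ?thesis by (simp add: power2_eq_square algebra_simps)
  qed
  finally show ?thesis .
qed

lemma rows_bound:
  assumes B1: "in_B p \<Omega> lam1 al1" and B2: "in_B p \<Omega> lam2 al2"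
    and f: "\<And>k i. k \<ge> 1 \<Longrightarrow> i \<le> 1 \<Longrightarrow> cmod (f k i) \<le> M"
    and M0: "M \<ge> 0" and x: "0 \<le> x" "x \<le> pi"
  defines "\<delta> \<equiv> \<lambda>k. cmod (rho_of lam1 k - rho_of lam2 k) + cmod (al1 k - al2 k)"
  assumes Zs: "summable (\<lambda>n. (\<delta> (Suc n))\<^sup>2)"
  shows "(\<Sum>n<N. (cmod (\<Sum>k<m. QT_term p lam1 al1 x f (Suc n) 0 (Suc k) - QT_term p lam2 al2 x f (Suc n) 0 (Suc k)))\<^sup>2
                + (cmod (\<Sum>k<m. QT_term p lam1 al1 x f (Suc n) 1 (Suc k) - QT_term p lam2 al2 x f (Suc n) 1 (Suc k)))\<^sup>2)
         \<le> C2 p \<Omega> * M\<^sup>2 * (\<Sum>n. (\<delta> (Suc n))\<^sup>2)"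
proof -
  define K where "K = Suc ` {..<m}"
  have K: "finite K" "\<And>k. k \<in> K \<Longrightarrow> k \<ge> 1" by (auto simp: K_def)
  define H1 where "H1 t = (\<Sum>k\<in>K. hh p lam1 al1 f k t)" for t
  define H2 where "H2 t = (\<Sum>k\<in>K. hh p lam2 al2 f k t)" for t
  define G where "G t = H1 t - H2 t" for t
  define Z2 where "Z2 = (\<Sum>n. (\<delta> (Suc n))\<^sup>2)"
  define E where "E = exp (\<Omega> * pi)"
  define IG where "IG = integral {0..pi} (\<lambda>t. (cmod (G t))\<^sup>2)"
  define IH where "IH = integral {0..pi} (\<lambda>t. (cmod (H2 t))\<^sup>2)"
  have Om: "\<Omega> \<ge> 0" using data_pt(6)[OF B1, of 1] by simp
  have E0: "E \<ge> 0" by (simp add: E_def)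
  have H1c: "continuous_on S H1" for S unfolding H1_def by (intro continuous_intros)
  have H2c: "continuous_on S H2" for S unfolding H2_def by (intro continuous_intros)
  have Gc: "continuous_on S G" for S unfolding G_def using H1c H2c by (intro continuous_intros)
  have IG0: "IG \<ge> 0" unfolding IG_def by (rule L2_nonneg[OF Gc])
  have IH0: "IH \<ge> 0" unfolding IH_def by (rule L2_nonneg[OF H2c])
  have d0: "\<delta> k \<ge> 0" for k by (simp add: \<delta>_def)
  have Z20: "Z2 \<ge> 0" unfolding Z2_def by (rule suminf_nonneg[OF Zs]) simp
  have SD: "(\<Sum>k\<in>K. (\<delta> k)\<^sup>2) \<le> Z2"
    unfolding K_def sum_Suc_reindex Z2_def by (rule sum_le_suminf[OF Zs]) auto
  have SX1: "(\<Sum>k\<in>K. (xi p lam1 al1 k)\<^sup>2) \<le> \<Omega>\<^sup>2"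
    unfolding K_def sum_Suc_reindex by (rule B_facts(3)[OF B1]) simp
  have SX2: "(\<Sum>k\<in>K. (xi p lam2 al2 k)\<^sup>2) \<le> \<Omega>\<^sup>2"
    unfolding K_def sum_Suc_reindex by (rule B_facts(3)[OF B2]) simp
  have IGb: "IG \<le> KG p \<Omega> * M\<^sup>2 * Z2"
  proof -
    define SX where "SX = (\<Sum>k\<in>K. \<delta> k * (xi p lam1 al1 k + xi p lam2 al2 k))"
    define c where "c = M*E*pi*(2+\<Omega>+2*pi)"
    have "IG \<le> 200*(real p+1) *
     ((2+\<Omega>)\<^sup>2*M\<^sup>2*(\<Sum>k\<in>K. (\<delta> k)\<^sup>2) + M\<^sup>2*(\<Sum>k\<in>K. (\<delta> k)\<^sup>2) + (c * SX)\<^sup>2)"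
      unfolding IG_def G_def H1_def H2_def SX_def c_def E_def \<delta>_def
      by (rule H_diff_bound[OF B1 B2 f M0 K])
    also have "SX\<^sup>2 \<le> Z2 * (4 * \<Omega>\<^sup>2)"
    proof -
      have "SX\<^sup>2 \<le> (\<Sum>k\<in>K. (\<delta> k)\<^sup>2) * (\<Sum>k\<in>K. (xi p lam1 al1 k + xi p lam2 al2 k)\<^sup>2)"
        unfolding SX_def by (rule Cauchy_Schwarz_ineq_sum)
      also have "(\<Sum>k\<in>K. (xi p lam1 al1 k + xi p lam2 al2 k)\<^sup>2) \<le> (\<Sum>k\<in>K. 2 * (xi p lam1 al1 k)\<^sup>2 + 2 * (xi p lam2 al2 k)\<^sup>2)"
      proof (rule sum_mono)
        fix k
        have "0 \<le> (xi p lam1 al1 k - xi p lam2 al2 k)\<^sup>2" by simp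
        then show "(xi p lam1 al1 k + xi p lam2 al2 k)\<^sup>2 \<le> 2 * (xi p lam1 al1 k)\<^sup>2 + 2 * (xi p lam2 al2 k)\<^sup>2"
          by (simp add: power2_eq_square algebra_simps)
      qed
      also have "\<dots> \<le> 4 * \<Omega>\<^sup>2" using SX1 SX2 by (simp add: sum.distrib sum_distrib_left[symmetric])
      finally have "SX\<^sup>2 \<le> (\<Sum>k\<in>K. (\<delta> k)\<^sup>2) * (4 * \<Omega>\<^sup>2)" by (simp add: mult_left_mono sum_nonneg)
      also have "\<dots> \<le> Z2 * (4 * \<Omega>\<^sup>2)" by (rule mult_right_mono[OF SD]) simp
      finally show ?thesis .
    qed
    then have "(c * SX)\<^sup>2 \<le> c\<^sup>2 * (Z2 * (4 * \<Omega>\<^sup>2))" by (simp add: power_mult_distrib mult_left_mono)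
    finally have "IG \<le> 200*(real p+1) * ((2+\<Omega>)\<^sup>2*M\<^sup>2*(\<Sum>k\<in>K. (\<delta> k)\<^sup>2) + M\<^sup>2*(\<Sum>k\<in>K. (\<delta> k)\<^sup>2) + c\<^sup>2 * (Z2 * (4 * \<Omega>\<^sup>2)))"
      by simp
    also have "\<dots> \<le> 200*(real p+1) * ((2+\<Omega>)\<^sup>2*M\<^sup>2*Z2 + M\<^sup>2*Z2 + c\<^sup>2 * (Z2 * (4 * \<Omega>\<^sup>2)))"
      using SD Z20 by (intro mult_left_mono add_mono mult_left_mono) auto
    also have "\<dots> = KG p \<Omega> * M\<^sup>2 * Z2"
    proof -
      have cq: "c\<^sup>2 = M\<^sup>2 * (exp(\<Omega>*pi)*pi*(2+\<Omega>+2*pi))\<^sup>2" by (simp add: c_def E_def power_mult_distrib)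
      show ?thesis unfolding cq KG_def by (simp add: algebra_simps)
    qed
    finally show ?thesis .
  qed
  have IHb: "IH \<le> KH p \<Omega> * M\<^sup>2"
  proof -
    define T where "T = (\<Sum>k\<in>K. (xi p lam2 al2 k)\<^sup>2)"
    have T0: "T \<ge> 0" by (simp add: T_def sum_nonneg)
    have "IH \<le> 200*(real p+1) * ((2+\<Omega>)\<^sup>2*M\<^sup>2*T + M\<^sup>2*T + (M*E*pi*(2+\<Omega>+pi)*T)\<^sup>2)"
      unfolding IH_def H2_def T_def E_def by (rule H_bound[OF B2 f M0 K])
    also have "\<dots> \<le> 200*(real p+1) * ((2+\<Omega>)\<^sup>2*M\<^sup>2*\<Omega>\<^sup>2 + M\<^sup>2*\<Omega>\<^sup>2 + (M*E*pi*(2+\<Omega>+pi)*\<Omega>\<^sup>2)\<^sup>2)"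
      using SX2 T0 M0 E0 Om unfolding T_def[symmetric]
      by (intro mult_left_mono add_mono power_mono) (auto intro: mult_left_mono)
    also have "\<dots> = KH p \<Omega> * M\<^sup>2"
    proof -
      have cq: "(M*E*pi*(2+\<Omega>+pi)*\<Omega>\<^sup>2)\<^sup>2 = M\<^sup>2 * (exp(\<Omega>*pi)*pi*(2+\<Omega>+pi)*\<Omega>\<^sup>2)\<^sup>2"
        by (simp add: E_def power_mult_distrib)
      show ?thesis unfolding cq KH_def by (simp add: algebra_simps)
    qed
    finally show ?thesis .
  qed
  have rowsum: "(\<Sum>k<m. QT_term p lam1 al1 x f n i (Suc k) - QT_term p lam2 al2 x f n i (Suc k))
      = integral {0..x} (\<lambda>t. cs (rhoI p lam1 n i) t * H1 t) - integral {0..x} (\<lambda>t. cs (rhoI p lam2 n i) t * H2 t)" for n i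
  proof -
    have "(\<Sum>k<m. QT_term p lam1 al1 x f n i (Suc k) - QT_term p lam2 al2 x f n i (Suc k))
        = (\<Sum>k\<in>K. QT_term p lam1 al1 x f n i k) - (\<Sum>k\<in>K. QT_term p lam2 al2 x f n i k)"
      by (simp add: K_def sum_Suc_reindex sum_subtractf)
    then show ?thesis unfolding H1_def H2_def using QT_sum_eq[OF K(1)] by simp
  qed
  define a where "a n = integral {0..x} (\<lambda>t. cs (rho_t p (Suc n)) t * G t)" for n
  define b where "b n = integral {0..x} (\<lambda>t. (cs (rho_of lam1 (Suc n)) t - cs (rho_t p (Suc n)) t) * G t)" for n
  define c where "c n = integral {0..x} (\<lambda>t. (cs (rho_of lam1 (Suc n)) t - cs (rho_of lam2 (Suc n)) t) * H2 t)" for n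
  have int_ok: "(\<lambda>t. u t * v t) integrable_on {0..x}" if "continuous_on {0..x} u" "continuous_on {0..x} v" for u v :: "real \<Rightarrow> complex"
    by (intro integrable_continuous_interval continuous_intros that)
  have Y1: "(\<Sum>k<m. QT_term p lam1 al1 x f (Suc n) 1 (Suc k) - QT_term p lam2 al2 x f (Suc n) 1 (Suc k)) = a n" for n
  proof -
    have "integral {0..x} (\<lambda>t. cs (rho_t p (Suc n)) t * H1 t) - integral {0..x} (\<lambda>t. cs (rho_t p (Suc n)) t * H2 t)
       = integral {0..x} (\<lambda>t. cs (rho_t p (Suc n)) t * H1 t - cs (rho_t p (Suc n)) t * H2 t)"
      by (rule integral_diff[symmetric]) (auto intro!: int_ok continuous_intros H1c H2c)
    then show ?thesis unfolding rowsum a_def G_def by (simp add: rhoI_def right_diff_distrib)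
  qed
  have Y0: "(\<Sum>k<m. QT_term p lam1 al1 x f (Suc n) 0 (Suc k) - QT_term p lam2 al2 x f (Suc n) 0 (Suc k)) = a n + b n + c n" for n
  proof -
    let ?c1 = "cs (rho_of lam1 (Suc n))" and ?c2 = "cs (rho_of lam2 (Suc n))" and ?c0 = "cs (rho_t p (Suc n))"
    have "integral {0..x} (\<lambda>t. ?c1 t * H1 t) - integral {0..x} (\<lambda>t. ?c2 t * H2 t)
       = integral {0..x} (\<lambda>t. ?c1 t * H1 t - ?c2 t * H2 t)"
      by (rule integral_diff[symmetric]) (auto intro!: int_ok continuous_intros H1c H2c)
    also have "\<dots> = integral {0..x} (\<lambda>t. (?c0 t * G t + (?c1 t - ?c0 t) * G t) + (?c1 t - ?c2 t) * H2 t)"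
      by (rule integral_cong) (simp add: G_def algebra_simps)
    also have "\<dots> = integral {0..x} (\<lambda>t. ?c0 t * G t + (?c1 t - ?c0 t) * G t) + c n"
      unfolding c_def by (rule integral_add) (auto intro!: int_ok integrable_add continuous_intros Gc H2c)
    also have "integral {0..x} (\<lambda>t. ?c0 t * G t + (?c1 t - ?c0 t) * G t) = a n + b n"
      unfolding a_def b_def by (rule integral_add) (auto intro!: int_ok continuous_intros Gc)
    finally show ?thesis unfolding rowsum by (simp add: rhoI_def)
  qed
  have Sa: "(\<Sum>n<N. (cmod (a n))\<^sup>2) \<le> 200 * (real p + 1) * IG"
  proof -
    have "(\<Sum>n<N. (cmod (a n))\<^sup>2) = (\<Sum>n\<in>Suc ` {..<N}. (cmod (integral {0..x} (\<lambda>t. cs (rho_t p n) t * G t)))\<^sup>2)"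
      by (simp add: sum_Suc_reindex a_def)
    also have "\<dots> \<le> 200 * (real p + 1) * integral {0..x} (\<lambda>t. (cmod (G t))\<^sup>2)"
      by (rule Bessel[OF _ Gc x]) simp
    also have "\<dots> \<le> 200 * (real p + 1) * IG"
      unfolding IG_def by (intro mult_left_mono L2_sub[OF Gc x]) auto
    finally show ?thesis .
  qed
  have Sb: "(\<Sum>n<N. (cmod (b n))\<^sup>2) \<le> pi^3 * E\<^sup>2 * \<Omega>\<^sup>2 * IG"
  proof -
    have "(\<Sum>n<N. (cmod (b n))\<^sup>2) \<le> (\<Sum>n<N. pi * (E * pi * xi p lam1 al1 (Suc n))\<^sup>2 * IG)"
    proof (rule sum_mono)
      fix n
      note d = data_pt[OF B1, of "Suc n"]
      show "(cmod (b n))\<^sup>2 \<le> pi * (E * pi * xi p lam1 al1 (Suc n))\<^sup>2 * IG"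
        unfolding b_def IG_def
      proof (rule CS_int_bound[OF _ Gc x])
        fix t assume t: "t \<in> {0..x}"
        have "cmod (cs (rho_of lam1 (Suc n)) t - cs (rho_t p (Suc n)) t) \<le> E * pi * cmod (rho_of lam1 (Suc n) - rho_t p (Suc n))"
          unfolding E_def by (rule cs_lip') (use d t x in auto)
        also have "\<dots> \<le> E * pi * xi p lam1 al1 (Suc n)" using d E0 by (intro mult_left_mono) auto
        finally show "cmod (cs (rho_of lam1 (Suc n)) t - cs (rho_t p (Suc n)) t) \<le> E * pi * xi p lam1 al1 (Suc n)" .
      qed (intro continuous_intros)
    qed
    also have "\<dots> = pi^3 * E\<^sup>2 * IG * (\<Sum>n<N. (xi p lam1 al1 (Suc n))\<^sup>2)"
      by (simp add: sum_distrib_left power_mult_distrib power2_eq_square power3_eq_cube algebra_simps)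
    also have "\<dots> \<le> pi^3 * E\<^sup>2 * IG * \<Omega>\<^sup>2"
      using B_facts(3)[OF B1, of "{..<N}"] IG0 by (intro mult_left_mono) auto
    finally show ?thesis by (simp add: algebra_simps)
  qed
  have Sc: "(\<Sum>n<N. (cmod (c n))\<^sup>2) \<le> pi^3 * E\<^sup>2 * Z2 * IH"
  proof -
    have "(\<Sum>n<N. (cmod (c n))\<^sup>2) \<le> (\<Sum>n<N. pi * (E * pi * \<delta> (Suc n))\<^sup>2 * IH)"
    proof (rule sum_mono)
      fix n
      note d1 = data_pt[OF B1, of "Suc n"] and d2 = data_pt[OF B2, of "Suc n"]
      show "(cmod (c n))\<^sup>2 \<le> pi * (E * pi * \<delta> (Suc n))\<^sup>2 * IH"
        unfolding c_def IH_def
      proof (rule CS_int_bound[OF _ H2c x])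
        fix t assume t: "t \<in> {0..x}"
        have "cmod (cs (rho_of lam1 (Suc n)) t - cs (rho_of lam2 (Suc n)) t) \<le> E * pi * cmod (rho_of lam1 (Suc n) - rho_of lam2 (Suc n))"
          unfolding E_def by (rule cs_lip') (use d1 d2 t x in auto)
        also have "\<dots> \<le> E * pi * \<delta> (Suc n)" using E0 by (intro mult_left_mono) (auto simp: \<delta>_def)
        finally show "cmod (cs (rho_of lam1 (Suc n)) t - cs (rho_of lam2 (Suc n)) t) \<le> E * pi * \<delta> (Suc n)" .
      qed (intro continuous_intros)
    qed
    also have "\<dots> = pi^3 * E\<^sup>2 * IH * (\<Sum>n<N. (\<delta> (Suc n))\<^sup>2)"
      by (simp add: sum_distrib_left power_mult_distrib power2_eq_square power3_eq_cube algebra_simps)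
    also have "\<dots> \<le> pi^3 * E\<^sup>2 * IH * Z2"
      unfolding Z2_def using IH0 by (intro mult_left_mono sum_le_suminf[OF Zs]) auto
    finally show ?thesis by (simp add: algebra_simps)
  qed
  have "(\<Sum>n<N. (cmod (a n + b n + c n))\<^sup>2 + (cmod (a n))\<^sup>2)
     \<le> (\<Sum>n<N. 4 * (cmod (a n))\<^sup>2 + 3 * (cmod (b n))\<^sup>2 + 3 * (cmod (c n))\<^sup>2)"
  proof (rule sum_mono)
    fix n
    show "(cmod (a n + b n + c n))\<^sup>2 + (cmod (a n))\<^sup>2 \<le> 4 * (cmod (a n))\<^sup>2 + 3 * (cmod (b n))\<^sup>2 + 3 * (cmod (c n))\<^sup>2"
      using sq3[of "a n" "b n" "c n"] by (simp add: algebra_simps)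
  qed
  also have "\<dots> = 4 * (\<Sum>n<N. (cmod (a n))\<^sup>2) + 3 * (\<Sum>n<N. (cmod (b n))\<^sup>2) + 3 * (\<Sum>n<N. (cmod (c n))\<^sup>2)"
    by (simp add: sum.distrib sum_distrib_left)
  also have "\<dots> \<le> 4 * (200 * (real p + 1) * IG) + 3 * (pi^3 * E\<^sup>2 * \<Omega>\<^sup>2 * IG) + 3 * (pi^3 * E\<^sup>2 * Z2 * IH)"
    using Sa Sb Sc by linarith
  also have "\<dots> = (800 * (real p + 1) + 3 * pi^3 * E\<^sup>2 * \<Omega>\<^sup>2) * IG + 3 * pi^3 * E\<^sup>2 * Z2 * IH"
    by (simp add: algebra_simps)
  also have "\<dots> \<le> (800 * (real p + 1) + 3 * pi^3 * E\<^sup>2 * \<Omega>\<^sup>2) * (KG p \<Omega> * M\<^sup>2 * Z2) + 3 * pi^3 * E\<^sup>2 * Z2 * (KH p \<Omega> * M\<^sup>2)"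
    using IGb IHb Z20 by (intro add_mono mult_left_mono) auto
  also have "\<dots> \<le> C2 p \<Omega> * M\<^sup>2 * Z2"
  proof -
    have "0 \<le> M\<^sup>2 * Z2" using Z20 by simp
    then show ?thesis by (simp add: C2_def E_def algebra_simps)
  qed
  finally show ?thesis unfolding Y0 Y1 Z2_def .
qed



theorem lemma4p2:
  fixes p :: nat and \<Omega> :: real
  assumes "\<Omega> > 0"
  shows "\<exists>C>0. \<forall>lam1 al1 lam2 al2 x f.
     in_B p \<Omega> lam1 al1 \<and> in_B p \<Omega> lam2 al2 \<and> x \<in> {0..pi} \<and> in_m f \<longrightarrow>
     (let A = (\<lambda>n i. QT p lam1 al1 x f n i - QT p lam2 al2 x f n i);
          Z = sqrt (\<Sum>n. (cmod (rho_of lam1 (Suc n) - rho_of lam2 (Suc n))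
                          + cmod (al1 (Suc n) - al2 (Suc n)))\<^sup>2)
      in (\<forall>n\<ge>1. \<forall>i\<le>1. summable (\<lambda>k. QT_term p lam1 al1 x f n i (Suc k))
                      \<and> summable (\<lambda>k. QT_term p lam2 al2 x f n i (Suc k)))
       \<and> summable (\<lambda>n. (cmod (A (Suc n) 0))\<^sup>2 + (cmod (A (Suc n) 1))\<^sup>2)
       \<and> sqrt (\<Sum>n. (cmod (A (Suc n) 0))\<^sup>2 + (cmod (A (Suc n) 1))\<^sup>2) \<le> C * Z * m_norm f)"
proof -
  define C where "C = sqrt (C2 p \<Omega>)"
  have KG0: "KG p \<Omega> \<ge> 0" by (simp add: KG_def)
  have KH0: "KH p \<Omega> \<ge> 0" by (simp add: KH_def)
  have C20: "C2 p \<Omega> > 0" unfolding C2_def using KG0 KH0 by (simp add: add_nonneg_pos)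
  have C0: "C > 0" using C20 by (simp add: C_def)
  show ?thesis
  proof (intro exI[of _ C] conjI allI impI C0)
    fix lam1 al1 lam2 al2 x and f :: "nat \<Rightarrow> nat \<Rightarrow> complex"
    assume H: "in_B p \<Omega> lam1 al1 \<and> in_B p \<Omega> lam2 al2 \<and> x \<in> {0..pi} \<and> in_m f"
    then have B1: "in_B p \<Omega> lam1 al1" and B2: "in_B p \<Omega> lam2 al2" and x: "0 \<le> x" "x \<le> pi" and fm: "in_m f"
      by auto
    define M where "M = m_norm f"
    have fb: "cmod (f k i) \<le> M" if "k \<ge> 1" "i \<le> 1" for k i
      unfolding M_def m_norm_def
      by (rule cSup_upper) (use fm that in \<open>auto simp: in_m_def\<close>)
    have M0: "M \<ge> 0" using fb[of 1 0] by (meson norm_ge_zero order_trans le_refl zero_le_one)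
    define \<delta> where "\<delta> k = cmod (rho_of lam1 k - rho_of lam2 k) + cmod (al1 k - al2 k)" for k
    have Zs: "summable (\<lambda>n. (\<delta> (Suc n))\<^sup>2)"
    proof (rule summable_comparison_test'[where N=0])
      show "summable (\<lambda>n. 2 * (xi p lam1 al1 (Suc n))\<^sup>2 + 2 * (xi p lam2 al2 (Suc n))\<^sup>2)"
        by (intro summable_add summable_mult B_facts(1)[OF B1] B_facts(1)[OF B2])
      fix n :: nat
      have "\<delta> (Suc n) \<le> xi p lam1 al1 (Suc n) + xi p lam2 al2 (Suc n)"
      proof -
        have r: "cmod (rho_of lam1 (Suc n) - rho_of lam2 (Suc n)) \<le>
            cmod (rho_of lam1 (Suc n) - rho_t p (Suc n)) + cmod (rho_of lam2 (Suc n) - rho_t p (Suc n))"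
        proof -
          have "rho_of lam1 (Suc n) - rho_of lam2 (Suc n) = (rho_of lam1 (Suc n) - rho_t p (Suc n)) - (rho_of lam2 (Suc n) - rho_t p (Suc n))" by simp
          then show ?thesis by (metis norm_triangle_ineq4)
        qed
        have a: "cmod (al1 (Suc n) - al2 (Suc n)) \<le>
            cmod (al1 (Suc n) - alpha_t p (Suc n)) + cmod (al2 (Suc n) - alpha_t p (Suc n))"
        proof -
          have "al1 (Suc n) - al2 (Suc n) = (al1 (Suc n) - alpha_t p (Suc n)) - (al2 (Suc n) - alpha_t p (Suc n))" by simp
          then show ?thesis by (metis norm_triangle_ineq4)
        qed
        show ?thesis using r a by (simp add: \<delta>_def xi_def)
      qed
      then have "(\<delta> (Suc n))\<^sup>2 \<le> (xi p lam1 al1 (Suc n) + xi p lam2 al2 (Suc n))\<^sup>2"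
        by (rule power_mono) (simp add: \<delta>_def)
      also have "\<dots> \<le> 2 * (xi p lam1 al1 (Suc n))\<^sup>2 + 2 * (xi p lam2 al2 (Suc n))\<^sup>2"
      proof -
        have "0 \<le> (xi p lam1 al1 (Suc n) - xi p lam2 al2 (Suc n))\<^sup>2" by simp
        then show ?thesis by (simp add: power2_eq_square algebra_simps)
      qed
      finally show "norm ((\<delta> (Suc n))\<^sup>2) \<le> 2 * (xi p lam1 al1 (Suc n))\<^sup>2 + 2 * (xi p lam2 al2 (Suc n))\<^sup>2" by simp
    qed
    define Z2 where "Z2 = (\<Sum>n. (\<delta> (Suc n))\<^sup>2)"
    have Z20: "Z2 \<ge> 0" unfolding Z2_def by (rule suminf_nonneg[OF Zs]) simp
    have S1: "summable (\<lambda>k. QT_term p lam1 al1 x f n i (Suc k))" for n i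
      by (rule QT_summable[OF B1 _ M0 x]) (rule fb)
    have S2: "summable (\<lambda>k. QT_term p lam2 al2 x f n i (Suc k))" for n i
      by (rule QT_summable[OF B2 _ M0 x]) (rule fb)
    define A where "A n i = QT p lam1 al1 x f n i - QT p lam2 al2 x f n i" for n i
    have lim: "(\<lambda>m. \<Sum>k<m. QT_term p lam1 al1 x f n i (Suc k) - QT_term p lam2 al2 x f n i (Suc k)) \<longlonglongrightarrow> A n i" for n i
    proof -
      have "(\<lambda>m. (\<Sum>k<m. QT_term p lam1 al1 x f n i (Suc k)) - (\<Sum>k<m. QT_term p lam2 al2 x f n i (Suc k))) \<longlonglongrightarrow> A n i"
        unfolding A_def QT_def by (intro tendsto_diff summable_LIMSEQ S1 S2)
      then show ?thesis by (simp add: sum_subtractf)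
    qed
    have part: "(\<Sum>n<N. (cmod (A (Suc n) 0))\<^sup>2 + (cmod (A (Suc n) 1))\<^sup>2) \<le> C2 p \<Omega> * M\<^sup>2 * Z2" for N
    proof (rule LIMSEQ_le_const2)
      show "(\<lambda>m. \<Sum>n<N. (cmod (\<Sum>k<m. QT_term p lam1 al1 x f (Suc n) 0 (Suc k) - QT_term p lam2 al2 x f (Suc n) 0 (Suc k)))\<^sup>2
                + (cmod (\<Sum>k<m. QT_term p lam1 al1 x f (Suc n) 1 (Suc k) - QT_term p lam2 al2 x f (Suc n) 1 (Suc k)))\<^sup>2)
         \<longlonglongrightarrow> (\<Sum>n<N. (cmod (A (Suc n) 0))\<^sup>2 + (cmod (A (Suc n) 1))\<^sup>2)"
        by (intro tendsto_sum tendsto_add tendsto_power tendsto_norm lim)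
      show "\<exists>N'. \<forall>m\<ge>N'. (\<Sum>n<N. (cmod (\<Sum>k<m. QT_term p lam1 al1 x f (Suc n) 0 (Suc k) - QT_term p lam2 al2 x f (Suc n) 0 (Suc k)))\<^sup>2
                + (cmod (\<Sum>k<m. QT_term p lam1 al1 x f (Suc n) 1 (Suc k) - QT_term p lam2 al2 x f (Suc n) 1 (Suc k)))\<^sup>2)
            \<le> C2 p \<Omega> * M\<^sup>2 * Z2"
        unfolding Z2_def \<delta>_def
        by (intro exI allI impI rows_bound[OF B1 B2 _ M0 x]) (auto intro: fb simp: Zs[unfolded \<delta>_def])
    qed
    have sumA: "summable (\<lambda>n. (cmod (A (Suc n) 0))\<^sup>2 + (cmod (A (Suc n) 1))\<^sup>2)"
      by (rule summableI_nonneg_bounded[OF _ part]) simp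
    have leA: "(\<Sum>n. (cmod (A (Suc n) 0))\<^sup>2 + (cmod (A (Suc n) 1))\<^sup>2) \<le> C2 p \<Omega> * M\<^sup>2 * Z2"
      by (rule suminf_le_const[OF sumA part])
    have "sqrt (\<Sum>n. (cmod (A (Suc n) 0))\<^sup>2 + (cmod (A (Suc n) 1))\<^sup>2) \<le> sqrt (C2 p \<Omega> * M\<^sup>2 * Z2)"
      using leA by simp
    also have "\<dots> = C * sqrt Z2 * M"
      using M0 by (simp add: C_def real_sqrt_mult)
    finally have fin: "sqrt (\<Sum>n. (cmod (A (Suc n) 0))\<^sup>2 + (cmod (A (Suc n) 1))\<^sup>2) \<le> C * sqrt Z2 * M" .
    show "let A = (\<lambda>n i. QT p lam1 al1 x f n i - QT p lam2 al2 x f n i);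
          Z = sqrt (\<Sum>n. (cmod (rho_of lam1 (Suc n) - rho_of lam2 (Suc n))
                          + cmod (al1 (Suc n) - al2 (Suc n)))\<^sup>2)
      in (\<forall>n\<ge>1. \<forall>i\<le>1. summable (\<lambda>k. QT_term p lam1 al1 x f n i (Suc k))
                      \<and> summable (\<lambda>k. QT_term p lam2 al2 x f n i (Suc k)))
       \<and> summable (\<lambda>n. (cmod (A (Suc n) 0))\<^sup>2 + (cmod (A (Suc n) 1))\<^sup>2)
       \<and> sqrt (\<Sum>n. (cmod (A (Suc n) 0))\<^sup>2 + (cmod (A (Suc n) 1))\<^sup>2) \<le> C * Z * m_norm f"
      unfolding Let_def using S1 S2 sumA fin
      by (simp add: A_def[abs_def] Z2_def \<delta>_def M_def)
  qed
qed


end
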